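(* Let $K$ be an algebraically closed field, $Q$ a quiver, $\mathcal X$ a $K$-linear representation of $Q$ such that $\mathrm{Ext}^1_{KQ}(G(\mathcal X),KQ)=0$, and $P$ a closed subquiver of $Q$. Then $\mathrm{Ext}^1_{KP}(G(\mathcal X\restriction P),KP)=0$.
   Context: A quiver $Q=(Q_0,Q_1)$ is a directed graph with vertices $Q_0$ and arrows $Q_1$ (arrow $a$ has source $s(a)$, target $t(a)$). Paths are composable sequences of arrows written left to right, with trivial paths $e_v$; the path algebra $KQ$ has $K$-basis all paths, with product = concatenation when the target of the first equals the source of the second, else $0$. Modules are right modules. A $K$-linear representation $\mathcal X$ of $Q$ consists of $K$-vector spaces $\mathcal X_v$ ($v\in Q_0$) and $K$-linear maps $\mathcal X_a:\mathcal X_{s(a)}\to\mathcal X_{t(a)}$ ($a\in Q_1$). $G(\mathcal X)$ is the $KQ$-module with underlying space $\bigoplus_{v\in Q_0}\mathcal X_v$, with $m e_w$ the $\mathcal X_w$-component of $m$ and $m a:=\mathcal X_a(m e_{s(a)})$, extended by distributivity. A subquiver $P=(P_0,P_1)$ has $P_0\subseteq Q_0$, $P_1\subseteq Q_1$ with sources and targets of arrows of $P_1$ in $P_0$; $\mathcal X\restriction P$ is the representation of $P$ with the same spaces and maps on $P_0,P_1$. For $S\subseteq Q_0$, the closure $\overline{S}^Q$ is the subquiver whose vertices are those reachable by a path in $Q$ from a vertex of $S$ (including $S$ itself) and whose arrows are all arrows of $Q$ with source among these vertices. A closed subquiver is one of the form $\overline{S}^Q$ for some $S\subseteq Q_0$.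 *)

theory Defs
  imports Main "HOL-Computational_Algebra.Polynomial"
begin

definition alg_closed_field :: "'k::field itself \<Rightarrow> bool" where
  "alg_closed_field _ \<longleftrightarrow> (\<forall>p::'k poly. degree p > 0 \<longrightarrow> (\<exists>z. poly p z = 0))"

text \<open>A quiver is given by a vertex set Q0, an arrow set Q1 and source/target maps s, t.
  A path is a pair (v, as): start vertex v and a list of arrows (left to right);
  (v, []) is the trivial path e_v.\<close>

definition quiver :: "'v set \<Rightarrow> 'a set \<Rightarrow> ('a \<Rightarrow> 'v) \<Rightarrow> ('a \<Rightarrow> 'v) \<Rightarrow> bool" where
  "quiver Q0 Q1 s t \<longleftrightarrow> (\<forall>a\<in>Q1. s a \<in> Q0 \<and> t a \<in> Q0)"

definition is_path :: "'v set \<Rightarrow> 'a set \<Rightarrow> ('a \<Rightarrow> 'v) \<Rightarrow> ('a \<Rightarrow> 'v) \<Rightarrow> 'v \<times> 'a list \<Rightarrow> bool" where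
  "is_path Q0 Q1 s t p \<longleftrightarrow>
     fst p \<in> Q0 \<and> set (snd p) \<subseteq> Q1 \<and>
     (snd p \<noteq> [] \<longrightarrow> s (hd (snd p)) = fst p) \<and>
     (\<forall>i. Suc i < length (snd p) \<longrightarrow> t (snd p ! i) = s (snd p ! Suc i))"

definition path_tgt :: "('a \<Rightarrow> 'v) \<Rightarrow> 'v \<times> 'a list \<Rightarrow> 'v" where
  "path_tgt t p = (if snd p = [] then fst p else t (last (snd p)))"

definition path_concat :: "('a \<Rightarrow> 'v) \<Rightarrow> 'v \<times> 'a list \<Rightarrow> 'v \<times> 'a list \<Rightarrow> ('v \<times> 'a list) option" where
  "path_concat t p q = (if path_tgt t p = fst q then Some (fst p, snd p @ snd q) else None)"

definition closure_verts :: "'v set \<Rightarrow> 'a set \<Rightarrow> ('a \<Rightarrow> 'v) \<Rightarrow> ('a \<Rightarrow> 'v) \<Rightarrow> 'v set \<Rightarrow> 'v set" where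
  "closure_verts Q0 Q1 s t S =
     {w. \<exists>v\<in>S. \<exists>as. is_path Q0 Q1 s t (v, as) \<and> path_tgt t (v, as) = w}"

definition closure_arrows :: "'v set \<Rightarrow> 'a set \<Rightarrow> ('a \<Rightarrow> 'v) \<Rightarrow> ('a \<Rightarrow> 'v) \<Rightarrow> 'v set \<Rightarrow> 'a set" where
  "closure_arrows Q0 Q1 s t S = {a\<in>Q1. s a \<in> closure_verts Q0 Q1 s t S}"

definition closed_subquiver ::
  "'v set \<Rightarrow> 'a set \<Rightarrow> ('a \<Rightarrow> 'v) \<Rightarrow> ('a \<Rightarrow> 'v) \<Rightarrow> 'v set \<Rightarrow> 'a set \<Rightarrow> bool" where
  "closed_subquiver Q0 Q1 s t P0 P1 \<longleftrightarrow>
     (\<exists>S\<subseteq>Q0. P0 = closure_verts Q0 Q1 s t S \<and> P1 = closure_arrows Q0 Q1 s t S)"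

record 'r rng =
  rcarrier :: "'r set"
  radd :: "'r \<Rightarrow> 'r \<Rightarrow> 'r"
  rmult :: "'r \<Rightarrow> 'r \<Rightarrow> 'r"

record ('m, 'r) rmod =
  mcarrier :: "'m set"
  mzero :: 'm
  madd :: "'m \<Rightarrow> 'm \<Rightarrow> 'm"
  mact :: "'m \<Rightarrow> 'r \<Rightarrow> 'm"

definition rmodule :: "'r rng \<Rightarrow> ('m, 'r) rmod \<Rightarrow> bool" where
  "rmodule R M \<longleftrightarrow>
     mzero M \<in> mcarrier M \<and>
     (\<forall>x\<in>mcarrier M. \<forall>y\<in>mcarrier M. madd M x y \<in> mcarrier M) \<and>
     (\<forall>x\<in>mcarrier M. \<forall>y\<in>mcarrier M. \<forall>z\<in>mcarrier M.
        madd M (madd M x y) z = madd M x (madd M y z)) \<and>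
     (\<forall>x\<in>mcarrier M. \<forall>y\<in>mcarrier M. madd M x y = madd M y x) \<and>
     (\<forall>x\<in>mcarrier M. madd M (mzero M) x = x) \<and>
     (\<forall>x\<in>mcarrier M. \<exists>y\<in>mcarrier M. madd M x y = mzero M) \<and>
     (\<forall>x\<in>mcarrier M. \<forall>r\<in>rcarrier R. mact M x r \<in> mcarrier M) \<and>
     (\<forall>x\<in>mcarrier M. \<forall>y\<in>mcarrier M. \<forall>r\<in>rcarrier R.
        mact M (madd M x y) r = madd M (mact M x r) (mact M y r)) \<and>
     (\<forall>x\<in>mcarrier M. \<forall>r\<in>rcarrier R. \<forall>r'\<in>rcarrier R.
        mact M x (radd R r r') = madd M (mact M x r) (mact M x r')) \<and>
     (\<forall>x\<in>mcarrier M. \<forall>r\<in>rcarrier R. \<forall>r'\<in>rcarrier R.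
        mact M (mact M x r) r' = mact M x (rmult R r r'))"

definition mod_hom :: "'r rng \<Rightarrow> ('m, 'r) rmod \<Rightarrow> ('n, 'r) rmod \<Rightarrow> ('m \<Rightarrow> 'n) \<Rightarrow> bool" where
  "mod_hom R M N f \<longleftrightarrow>
     (\<forall>x\<in>mcarrier M. f x \<in> mcarrier N) \<and>
     (\<forall>x\<in>mcarrier M. \<forall>y\<in>mcarrier M. f (madd M x y) = madd N (f x) (f y)) \<and>
     (\<forall>x\<in>mcarrier M. \<forall>r\<in>rcarrier R. f (mact M x r) = mact N (f x) r)"

text \<open>Ext^1_R(M,N) = 0, in the Yoneda sense: every short exact sequence
  0 \<rightarrow> N \<rightarrow> E \<rightarrow> M \<rightarrow> 0 of right R-modules splits (equivalently, the inclusion of N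
  has a retraction). The middle term E ranges over modules whose carrier lies in
  the type 'n \<times> 'm, which (up to isomorphism) covers every extension, since the
  underlying set of an extension is in bijection with N \<times> M.\<close>
definition Ext1_vanishes :: "'r rng \<Rightarrow> ('m, 'r) rmod \<Rightarrow> ('n, 'r) rmod \<Rightarrow> bool" where
  "Ext1_vanishes R M N \<longleftrightarrow>
     (\<forall>(E :: ('n \<times> 'm, 'r) rmod) i p.
        rmodule R E \<and> mod_hom R N E i \<and> mod_hom R E M p \<and>
        inj_on i (mcarrier N) \<and> p ` mcarrier E = mcarrier M \<and>
        {x\<in>mcarrier E. p x = mzero M} = i ` mcarrier N
        \<longrightarrow> (\<exists>q. mod_hom R E N q \<and> (\<forall>x\<in>mcarrier N. q (i x) = x)))"

definition path_alg_carrier ::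
  "'v set \<Rightarrow> 'a set \<Rightarrow> ('a \<Rightarrow> 'v) \<Rightarrow> ('a \<Rightarrow> 'v) \<Rightarrow> ('v \<times> 'a list \<Rightarrow> 'k::field) set" where
  "path_alg_carrier Q0 Q1 s t =
     {f. finite {p. f p \<noteq> 0} \<and> (\<forall>p. f p \<noteq> 0 \<longrightarrow> is_path Q0 Q1 s t p)}"

definition path_alg_mult ::
  "('a \<Rightarrow> 'v) \<Rightarrow> ('v \<times> 'a list \<Rightarrow> 'k::field) \<Rightarrow> ('v \<times> 'a list \<Rightarrow> 'k) \<Rightarrow> ('v \<times> 'a list \<Rightarrow> 'k)" where
  "path_alg_mult t f g = (\<lambda>p. \<Sum>p1\<in>{q. f q \<noteq> 0}. \<Sum>p2\<in>{q. g q \<noteq> 0}.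
       (if path_concat t p1 p2 = Some p then f p1 * g p2 else 0))"

definition path_ring ::
  "'v set \<Rightarrow> 'a set \<Rightarrow> ('a \<Rightarrow> 'v) \<Rightarrow> ('a \<Rightarrow> 'v) \<Rightarrow> ('v \<times> 'a list \<Rightarrow> 'k::field) rng" where
  "path_ring Q0 Q1 s t =
     \<lparr> rcarrier = path_alg_carrier Q0 Q1 s t,
       radd = (\<lambda>f g p. f p + g p),
       rmult = path_alg_mult t \<rparr>"

definition regular_module ::
  "'v set \<Rightarrow> 'a set \<Rightarrow> ('a \<Rightarrow> 'v) \<Rightarrow> ('a \<Rightarrow> 'v)
     \<Rightarrow> ('v \<times> 'a list \<Rightarrow> 'k::field, 'v \<times> 'a list \<Rightarrow> 'k) rmod" where
  "regular_module Q0 Q1 s t =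
     \<lparr> mcarrier = path_alg_carrier Q0 Q1 s t,
       mzero = (\<lambda>p. 0),
       madd = (\<lambda>f g p. f p + g p),
       mact = path_alg_mult t \<rparr>"

text \<open>A K-linear representation: the spaces X_v are K-subspaces V v of an ambient
  K-vector space 'x (with scalar multiplication scale), and X_a is a map that is
  K-linear from V (s a) to V (t a).\<close>
definition representation ::
  "'v set \<Rightarrow> 'a set \<Rightarrow> ('a \<Rightarrow> 'v) \<Rightarrow> ('a \<Rightarrow> 'v) \<Rightarrow> ('k::field \<Rightarrow> 'x::ab_group_add \<Rightarrow> 'x)
     \<Rightarrow> ('v \<Rightarrow> 'x set) \<Rightarrow> ('a \<Rightarrow> 'x \<Rightarrow> 'x) \<Rightarrow> bool" where
  "representation Q0 Q1 s t scale V X \<longleftrightarrow>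
     vector_space scale \<and>
     (\<forall>v\<in>Q0. module.subspace scale (V v)) \<and>
     (\<forall>a\<in>Q1. (\<forall>x\<in>V (s a). X a x \<in> V (t a)) \<and>
        (\<forall>x\<in>V (s a). \<forall>y\<in>V (s a). X a (x + y) = X a x + X a y) \<and>
        (\<forall>c. \<forall>x\<in>V (s a). X a (scale c x) = scale c (X a x)))"

definition eval_path :: "('a \<Rightarrow> 'x \<Rightarrow> 'x) \<Rightarrow> 'v \<times> 'a list \<Rightarrow> 'x \<Rightarrow> 'x" where
  "eval_path X p x = foldl (\<lambda>y a. X a y) x (snd p)"

text \<open>G(X): underlying space the direct sum of the X_v (v in Q0), i.e. finitely
  supported vertex-indexed families; m \<cdot> p is supported at the target of p with value
  X_p(m e_{source p}); extended K-linearly to KQ.\<close>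
definition G_module ::
  "'v set \<Rightarrow> 'a set \<Rightarrow> ('a \<Rightarrow> 'v) \<Rightarrow> ('a \<Rightarrow> 'v) \<Rightarrow> ('k::field \<Rightarrow> 'x::ab_group_add \<Rightarrow> 'x)
     \<Rightarrow> ('v \<Rightarrow> 'x set) \<Rightarrow> ('a \<Rightarrow> 'x \<Rightarrow> 'x) \<Rightarrow> ('v \<Rightarrow> 'x, 'v \<times> 'a list \<Rightarrow> 'k) rmod" where
  "G_module Q0 Q1 s t scale V X =
     \<lparr> mcarrier = {m. (\<forall>v\<in>Q0. m v \<in> V v) \<and> (\<forall>v. v \<notin> Q0 \<longrightarrow> m v = 0) \<and> finite {v. m v \<noteq> 0}},
       mzero = (\<lambda>v. 0),
       madd = (\<lambda>m m' v. m v + m' v),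
       mact = (\<lambda>m f w. \<Sum>p\<in>{q. f q \<noteq> 0}.
                 (if path_tgt t p = w then scale (f p) (eval_path X p (m (fst p))) else 0)) \<rparr>"

end

theory Submission
  imports Defs "HOL-Algebra.FiniteProduct" "HOL-Library.Product_Plus" "HOL-Library.Function_Algebras"
begin

definition sc :: "'k::field \<Rightarrow> 'v \<times> 'a list \<Rightarrow> 'v \<times> 'a list \<Rightarrow> 'k" where
  "sc c p = (\<lambda>q. if q = p then c else 0)"

lemma concat_Some: "path_concat t p1 p2 = Some q \<longleftrightarrow> path_tgt t p1 = fst p2 \<and> q = (fst p1, snd p1 @ snd p2)"
  unfolding path_concat_def by auto

lemma tgt_append: "path_tgt t p1 = fst p2 \<Longrightarrow> path_tgt t (fst p1, snd p1 @ snd p2) = path_tgt t p2"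
  unfolding path_tgt_def by auto

lemma eval_append: "eval_path X (v, as @ bs) x = eval_path X (w, bs) (eval_path X (u, as) x)"
  unfolding eval_path_def by simp

lemma eval_append': "eval_path X (v, snd p @ snd q) x = eval_path X q (eval_path X p x)"
  unfolding eval_path_def by simp

lemma eval_Nil[simp]: "eval_path X (v, []) x = x"
  unfolding eval_path_def by simp

lemma eval_Cons: "eval_path X (v, a # as) x = eval_path X (w, as) (X a x)"
  unfolding eval_path_def by simp

lemma tgt_Nil[simp]: "path_tgt t (v, []) = v"
  unfolding path_tgt_def by simp

lemma tgt_Cons: "path_tgt t (v, a # as) = path_tgt t (t a, as)"
  unfolding path_tgt_def by simp

lemma is_path_Nil: "is_path Q0 Q1 s t (v, []) \<longleftrightarrow> v \<in> Q0"
  unfolding is_path_def by simp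

lemma is_path_Cons:
  assumes "quiver Q0 Q1 s t"
  shows "is_path Q0 Q1 s t (v, a # as) \<longleftrightarrow> v \<in> Q0 \<and> a \<in> Q1 \<and> s a = v \<and> is_path Q0 Q1 s t (t a, as)"
proof
  assume H: "is_path Q0 Q1 s t (v, a # as)"
  then have a: "v \<in> Q0" "a \<in> Q1" "s a = v" "set as \<subseteq> Q1"
    and ch: "\<And>i. Suc i < length (a # as) \<Longrightarrow> t ((a#as) ! i) = s ((a#as) ! Suc i)"
    unfolding is_path_def by auto
  have "t a \<in> Q0" using assms a unfolding quiver_def by auto
  moreover have "as \<noteq> [] \<Longrightarrow> s (hd as) = t a" using ch[of 0] by (cases as) auto
  moreover have "\<And>i. Suc i < length as \<Longrightarrow> t (as ! i) = s (as ! Suc i)"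
    using ch by (metis Suc_less_eq length_Cons nth_Cons_Suc)
  ultimately show "v \<in> Q0 \<and> a \<in> Q1 \<and> s a = v \<and> is_path Q0 Q1 s t (t a, as)"
    using a unfolding is_path_def by auto
next
  assume H: "v \<in> Q0 \<and> a \<in> Q1 \<and> s a = v \<and> is_path Q0 Q1 s t (t a, as)"
  then have a: "v \<in> Q0" "a \<in> Q1" "s a = v" "set as \<subseteq> Q1"
    and h: "as \<noteq> [] \<Longrightarrow> s (hd as) = t a"
    and ch: "\<And>i. Suc i < length as \<Longrightarrow> t (as ! i) = s (as ! Suc i)"
    unfolding is_path_def by auto
  have "\<And>i. Suc i < length (a # as) \<Longrightarrow> t ((a#as) ! i) = s ((a#as) ! Suc i)"
  proof -
    fix i assume i: "Suc i < length (a # as)"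
    show "t ((a#as) ! i) = s ((a#as) ! Suc i)"
    proof (cases i)
      case 0 then show ?thesis using h i by (cases as) auto
    next
      case (Suc j) then show ?thesis using ch i by auto
    qed
  qed
  then show "is_path Q0 Q1 s t (v, a # as)" using a unfolding is_path_def by auto
qed

lemma is_path_tgt:
  assumes "quiver Q0 Q1 s t" "is_path Q0 Q1 s t (v, as)"
  shows "path_tgt t (v, as) \<in> Q0"
  using assms(2)
proof (induction as arbitrary: v)
  case Nil then show ?case by (simp add: is_path_Nil)
next
  case (Cons a as) then show ?case by (simp add: is_path_Cons[OF assms(1)] tgt_Cons)
qed

lemma is_path_tgt': "quiver Q0 Q1 s t \<Longrightarrow> is_path Q0 Q1 s t p \<Longrightarrow> path_tgt t p \<in> Q0"
  using is_path_tgt[of Q0 Q1 s t "fst p" "snd p"] by simp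

lemma is_path_fst: "is_path Q0 Q1 s t p \<Longrightarrow> fst p \<in> Q0"
  unfolding is_path_def by simp

lemma is_path_append:
  assumes "quiver Q0 Q1 s t" "is_path Q0 Q1 s t (v, as)" "is_path Q0 Q1 s t (w, bs)" "path_tgt t (v, as) = w"
  shows "is_path Q0 Q1 s t (v, as @ bs)"
  using assms(2,4)
proof (induction as arbitrary: v)
  case Nil then show ?case using assms(3) by simp
next
  case (Cons a as) then show ?case by (simp add: is_path_Cons[OF assms(1)] tgt_Cons)
qed

lemma is_path_append': "quiver Q0 Q1 s t \<Longrightarrow> is_path Q0 Q1 s t p1 \<Longrightarrow> is_path Q0 Q1 s t p2 \<Longrightarrow>
   path_tgt t p1 = fst p2 \<Longrightarrow> is_path Q0 Q1 s t (fst p1, snd p1 @ snd p2)"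
  using is_path_append[of Q0 Q1 s t "fst p1" "snd p1" "fst p2" "snd p2"] by simp

lemma mult_superset:
  assumes "finite A" "finite B" "{q. f q \<noteq> 0} \<subseteq> A" "{q. g q \<noteq> 0} \<subseteq> B"
  shows "path_alg_mult t f g p = (\<Sum>p1\<in>A. \<Sum>p2\<in>B. if path_concat t p1 p2 = Some p then f p1 * g p2 else 0)"
proof -
  have "path_alg_mult t f g p = (\<Sum>p1\<in>{q. f q \<noteq> 0}. \<Sum>p2\<in>B. if path_concat t p1 p2 = Some p then f p1 * g p2 else 0)"
    unfolding path_alg_mult_def
    by (rule sum.cong[OF refl], rule sum.mono_neutral_left) (use assms in \<open>auto intro: finite_subset\<close>)
  also have "\<dots> = (\<Sum>p1\<in>A. \<Sum>p2\<in>B. if path_concat t p1 p2 = Some p then f p1 * g p2 else 0)"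
    by (rule sum.mono_neutral_left) (use assms in \<open>auto intro!: sum.neutral split: if_splits\<close>)
  finally show ?thesis .
qed

locale qrep =
  fixes Q0 :: "'v set" and Q1 :: "'a set" and s t :: "'a \<Rightarrow> 'v"
    and scale :: "'k::field \<Rightarrow> 'x::ab_group_add \<Rightarrow> 'x"
    and V :: "'v \<Rightarrow> 'x set" and X :: "'a \<Rightarrow> 'x \<Rightarrow> 'x"
  assumes quiv: "quiver Q0 Q1 s t" and rep: "representation Q0 Q1 s t scale V X"
begin

sublocale vs: module scale
  using rep unfolding representation_def by (simp add: module_iff_vector_space)

lemma subsp: "v \<in> Q0 \<Longrightarrow> vs.subspace (V v)"
  using rep unfolding representation_def by auto

lemma V0: "v \<in> Q0 \<Longrightarrow> 0 \<in> V v"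
  using subsp vs.subspace_0 by blast

lemma X_in: "a \<in> Q1 \<Longrightarrow> x \<in> V (s a) \<Longrightarrow> X a x \<in> V (t a)"
  using rep unfolding representation_def by auto

lemma X_add: "a \<in> Q1 \<Longrightarrow> x \<in> V (s a) \<Longrightarrow> y \<in> V (s a) \<Longrightarrow> X a (x + y) = X a x + X a y"
  using rep unfolding representation_def by auto

lemma X_scale: "a \<in> Q1 \<Longrightarrow> x \<in> V (s a) \<Longrightarrow> X a (scale c x) = scale c (X a x)"
  using rep unfolding representation_def by auto

lemma sQ0: "a \<in> Q1 \<Longrightarrow> s a \<in> Q0" and tQ0: "a \<in> Q1 \<Longrightarrow> t a \<in> Q0"
  using quiv unfolding quiver_def by auto

lemma X_zero: "a \<in> Q1 \<Longrightarrow> X a 0 = 0"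
  using X_add[of a 0 0] V0[OF sQ0] by simp

lemma eval_in0: "is_path Q0 Q1 s t (v, as) \<Longrightarrow> x \<in> V v \<Longrightarrow> eval_path X (v, as) x \<in> V (path_tgt t (v, as))"
proof (induction as arbitrary: v x)
  case Nil then show ?case by simp
next
  case (Cons a as) then show ?case
    by (auto simp: is_path_Cons[OF quiv] tgt_Cons eval_Cons[where w="t a"] X_in)
qed

lemma eval_in: "is_path Q0 Q1 s t p \<Longrightarrow> x \<in> V (fst p) \<Longrightarrow> eval_path X p x \<in> V (path_tgt t p)"
  using eval_in0[of "fst p" "snd p"] by simp

lemma eval_lin0: "is_path Q0 Q1 s t (v, as) \<Longrightarrow> x \<in> V v \<Longrightarrow> y \<in> V v \<Longrightarrow>
   eval_path X (v, as) (x + y) = eval_path X (v, as) x + eval_path X (v, as) y \<and>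
   eval_path X (v, as) (scale c x) = scale c (eval_path X (v, as) x)"
proof (induction as arbitrary: v x y)
  case Nil then show ?case by simp
next
  case (Cons a as)
  then have a: "a \<in> Q1" "s a = v" "is_path Q0 Q1 s t (t a, as)" by (auto simp: is_path_Cons[OF quiv])
  show ?case using Cons.IH[OF a(3) X_in X_in] Cons.prems a
    by (auto simp: eval_Cons[where w="t a"] X_add X_scale)
qed

lemma eval_add: "is_path Q0 Q1 s t p \<Longrightarrow> x \<in> V (fst p) \<Longrightarrow> y \<in> V (fst p) \<Longrightarrow>
   eval_path X p (x + y) = eval_path X p x + eval_path X p y"
  using eval_lin0[of "fst p" "snd p"] by simp

lemma eval_scale: "is_path Q0 Q1 s t p \<Longrightarrow> x \<in> V (fst p) \<Longrightarrow>
   eval_path X p (scale c x) = scale c (eval_path X p x)"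
  using eval_lin0[of "fst p" "snd p" x x c] by simp

lemma eval_zero: "is_path Q0 Q1 s t p \<Longrightarrow> eval_path X p 0 = 0"
  using eval_scale[of p 0 0] V0[OF is_path_fst[of Q0 Q1 s t p]] by simp

lemma eval_sum: "is_path Q0 Q1 s t p \<Longrightarrow> (\<And>i. i \<in> I \<Longrightarrow> y i \<in> V (fst p)) \<Longrightarrow>
   eval_path X p (sum y I) = (\<Sum>i\<in>I. eval_path X p (y i))"
proof (induction I rule: infinite_finite_induct)
  case (infinite A) then show ?case by (simp add: eval_zero)
next
  case empty then show ?case by (simp add: eval_zero)
next
  case (insert i I)
  have "sum y I \<in> V (fst p)"
    using insert subsp[OF is_path_fst[OF insert(4)]] by (auto intro: vs.subspace_sum)
  then show ?case using insert by (simp add: eval_add)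
qed

abbreviation "GM \<equiv> G_module Q0 Q1 s t scale V X"
abbreviation "PC \<equiv> path_alg_carrier Q0 Q1 s t :: ('v \<times> 'a list \<Rightarrow> 'k) set"
abbreviation "PR \<equiv> path_ring Q0 Q1 s t :: ('v \<times> 'a list \<Rightarrow> 'k) rng"

lemma GM_carrier: "m \<in> mcarrier GM \<longleftrightarrow> (\<forall>v\<in>Q0. m v \<in> V v) \<and> (\<forall>v. v \<notin> Q0 \<longrightarrow> m v = 0) \<and> finite {v. m v \<noteq> 0}"
  unfolding G_module_def by simp

lemma GM_simps: "mzero GM = (\<lambda>v. 0)" "madd GM = (\<lambda>m m' v. m v + m' v)"
  unfolding G_module_def by simp_all

lemma PC_iff: "f \<in> PC \<longleftrightarrow> finite {p. f p \<noteq> 0} \<and> (\<forall>p. f p \<noteq> 0 \<longrightarrow> is_path Q0 Q1 s t p)"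
  unfolding path_alg_carrier_def by simp

lemma PR_simps: "rcarrier PR = PC" "radd PR = (\<lambda>f g p. f p + g p)" "rmult PR = path_alg_mult t"
  unfolding path_ring_def by simp_all

lemma G_act_superset:
  assumes "finite A" "{q. f q \<noteq> 0} \<subseteq> A"
  shows "mact GM m f w = (\<Sum>p\<in>A. if path_tgt t p = w then scale (f p) (eval_path X p (m (fst p))) else 0)"
  unfolding G_module_def
  by (simp, rule sum.mono_neutral_left) (use assms in auto)

lemma G_act_def': "mact GM m f w = (\<Sum>p\<in>{q. f q \<noteq> 0}. if path_tgt t p = w then scale (f p) (eval_path X p (m (fst p))) else 0)"
  unfolding G_module_def by simp

end

context qrep begin
lemma G_act_in:
  assumes m: "m \<in> mcarrier GM" and f: "f \<in> PC"
  shows "mact GM m f \<in> mcarrier GM"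
proof -
  have fin: "finite {q. f q \<noteq> 0}" and pa: "\<And>p. f p \<noteq> 0 \<Longrightarrow> is_path Q0 Q1 s t p"
    using f by (auto simp: PC_iff)
  have mV: "\<And>v. v \<in> Q0 \<Longrightarrow> m v \<in> V v" using m by (simp add: GM_carrier)
  have 1: "\<forall>w\<in>Q0. mact GM m f w \<in> V w"
  proof
    fix w assume w: "w \<in> Q0"
    show "mact GM m f w \<in> V w" unfolding G_act_def'
    proof (rule vs.subspace_sum[OF subsp[OF w]])
      fix p assume "p \<in> {q. f q \<noteq> 0}"
      then have p: "is_path Q0 Q1 s t p" using pa by auto
      show "(if path_tgt t p = w then scale (f p) (eval_path X p (m (fst p))) else 0) \<in> V w"
        using eval_in[OF p mV[OF is_path_fst[OF p]]] vs.subspace_scale[OF subsp[OF w]] V0[OF w]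
        by auto
    qed
  qed
  have 2: "\<forall>w. w \<notin> Q0 \<longrightarrow> mact GM m f w = 0"
    unfolding G_act_def' using pa is_path_tgt'[OF quiv] by (auto intro!: sum.neutral)
  have "{w. mact GM m f w \<noteq> 0} \<subseteq> path_tgt t ` {q. f q \<noteq> 0}"
  proof
    fix w assume "w \<in> {w. mact GM m f w \<noteq> 0}"
    then have ne: "mact GM m f w \<noteq> 0" by simp
    have "\<exists>p. f p \<noteq> 0 \<and> path_tgt t p = w"
    proof (rule ccontr)
      assume "\<not> ?thesis"
      then have "mact GM m f w = 0" unfolding G_act_def' by (intro sum.neutral) auto
      then show False using ne by simp
    qed
    then obtain p where "f p \<noteq> 0" "path_tgt t p = w" by blast
    then show "w \<in> path_tgt t ` {q. f q \<noteq> 0}" by auto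
  qed
  then have 3: "finite {w. mact GM m f w \<noteq> 0}" using fin finite_subset by blast
  show ?thesis using 1 2 3 by (simp add: GM_carrier)
qed

lemma G_act_addm:
  assumes m: "m \<in> mcarrier GM" and m': "m' \<in> mcarrier GM" and f: "f \<in> PC"
  shows "mact GM (\<lambda>v. m v + m' v) f = (\<lambda>v. mact GM m f v + mact GM m' f v)"
proof (rule ext)
  fix w
  have pa: "\<And>p. f p \<noteq> 0 \<Longrightarrow> is_path Q0 Q1 s t p" using f by (auto simp: PC_iff)
  have mV: "\<And>v. v \<in> Q0 \<Longrightarrow> m v \<in> V v" "\<And>v. v \<in> Q0 \<Longrightarrow> m' v \<in> V v"
    using m m' by (simp_all add: GM_carrier)
  show "mact GM (\<lambda>v. m v + m' v) f w = mact GM m f w + mact GM m' f w"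
    unfolding G_act_def' sum.distrib[symmetric]
  proof (rule sum.cong[OF refl])
    fix p assume "p \<in> {q. f q \<noteq> 0}"
    then have p: "is_path Q0 Q1 s t p" using pa by auto
    show "(if path_tgt t p = w then scale (f p) (eval_path X p (m (fst p) + m' (fst p))) else 0) =
      (if path_tgt t p = w then scale (f p) (eval_path X p (m (fst p))) else 0) +
      (if path_tgt t p = w then scale (f p) (eval_path X p (m' (fst p))) else 0)"
      using eval_add[OF p mV(1)[OF is_path_fst[OF p]] mV(2)[OF is_path_fst[OF p]]]
      by (simp add: vs.scale_right_distrib)
  qed
qed

lemma G_act_addr:
  assumes f: "f \<in> PC" and g: "g \<in> PC"
  shows "mact GM m (\<lambda>p. f p + g p) = (\<lambda>v. mact GM m f v + mact GM m g v)"
proof (rule ext)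
  fix w
  let ?A = "{q. f q \<noteq> 0} \<union> {q. g q \<noteq> 0}"
  have fA: "finite ?A" using f g by (simp add: PC_iff)
  have e1: "mact GM m f w = (\<Sum>p\<in>?A. if path_tgt t p = w then scale (f p) (eval_path X p (m (fst p))) else 0)"
    by (rule G_act_superset[OF fA]) auto
  have e2: "mact GM m g w = (\<Sum>p\<in>?A. if path_tgt t p = w then scale (g p) (eval_path X p (m (fst p))) else 0)"
    by (rule G_act_superset[OF fA]) auto
  have e3: "mact GM m (\<lambda>p. f p + g p) w = (\<Sum>p\<in>?A. if path_tgt t p = w then scale (f p + g p) (eval_path X p (m (fst p))) else 0)"
    by (rule G_act_superset[OF fA]) auto
  show "mact GM m (\<lambda>p. f p + g p) w = mact GM m f w + mact GM m g w"
    unfolding e1 e2 e3 sum.distrib[symmetric]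
    by (rule sum.cong[OF refl]) (simp add: vs.scale_left_distrib)
qed

end

context qrep begin
lemma G_act_assoc:
  assumes m: "m \<in> mcarrier GM" and r: "r \<in> PC" and r': "r' \<in> PC"
  shows "mact GM (mact GM m r) r' = mact GM m (path_alg_mult t r r')"
proof (rule ext)
  fix w
  define A where "A = {q. r q \<noteq> 0}"
  define B where "B = {q. r' q \<noteq> 0}"
  have fA: "finite A" and fB: "finite B" using r r' by (auto simp: PC_iff A_def B_def)
  have pA: "\<And>p. p \<in> A \<Longrightarrow> is_path Q0 Q1 s t p" using r by (auto simp: PC_iff A_def)
  have pB: "\<And>p. p \<in> B \<Longrightarrow> is_path Q0 Q1 s t p" using r' by (auto simp: PC_iff B_def)
  have mV: "\<And>v. v \<in> Q0 \<Longrightarrow> m v \<in> V v" using m by (simp add: GM_carrier)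
  define cc :: "('v \<times> 'a list) \<times> ('v \<times> 'a list) \<Rightarrow> 'v \<times> 'a list"
    where "cc = (\<lambda>(p1, p2). (fst p1, snd p1 @ snd p2))"
  define C where "C = cc ` (A \<times> B)"
  have fC: "finite C" unfolding C_def using fA fB by simp
  have rr': "\<And>q. path_alg_mult t r r' q = (\<Sum>p\<in>A. \<Sum>p'\<in>B. if path_concat t p p' = Some q then r p * r' p' else 0)"
    unfolding path_alg_mult_def A_def B_def by simp
  have suppC: "{q. path_alg_mult t r r' q \<noteq> 0} \<subseteq> C"
  proof
    fix q assume "q \<in> {q. path_alg_mult t r r' q \<noteq> 0}"
    then have ne: "path_alg_mult t r r' q \<noteq> 0" by simp
    have "\<exists>p\<in>A. \<exists>p'\<in>B. path_concat t p p' = Some q"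
    proof (rule ccontr)
      assume "\<not> ?thesis"
      then have "path_alg_mult t r r' q = 0" unfolding rr' by (intro sum.neutral) auto
      then show False using ne by simp
    qed
    then obtain p p' where "p \<in> A" "p' \<in> B" "path_concat t p p' = Some q" by blast
    then show "q \<in> C" unfolding C_def cc_def concat_Some by force
  qed
  define mr where "mr = mact GM m r"
  have mr: "\<And>u. mr u = (\<Sum>p\<in>A. if path_tgt t p = u then scale (r p) (eval_path X p (m (fst p))) else 0)"
    unfolding mr_def A_def G_act_def' by simp
  have step: "eval_path X p' (mr (fst p')) = (\<Sum>p\<in>A. if path_tgt t p = fst p' then scale (r p) (eval_path X p' (eval_path X p (m (fst p)))) else 0)"
    if p': "p' \<in> B" for p'
  proof -
    have inV: "(if path_tgt t p = fst p' then scale (r p) (eval_path X p (m (fst p))) else 0) \<in> V (fst p')"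
      if "p \<in> A" for p
      using eval_in[OF pA[OF that] mV[OF is_path_fst[OF pA[OF that]]]] V0[OF is_path_fst[OF pB[OF p']]]
        vs.subspace_scale[OF subsp[OF is_path_fst[OF pB[OF p']]]] by auto
    show ?thesis unfolding mr
      apply (subst eval_sum[OF pB[OF p'] inV], assumption)
    proof (rule sum.cong[OF refl])
      fix p assume pa: "p \<in> A"
      have e: "eval_path X p (m (fst p)) \<in> V (path_tgt t p)"
        using eval_in[OF pA[OF pa] mV[OF is_path_fst[OF pA[OF pa]]]] .
      show "eval_path X p' (if path_tgt t p = fst p' then scale (r p) (eval_path X p (m (fst p))) else 0) =
         (if path_tgt t p = fst p' then scale (r p) (eval_path X p' (eval_path X p (m (fst p)))) else 0)"
        using e eval_scale[OF pB[OF p']] eval_zero[OF pB[OF p']] by auto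
    qed
  qed
  have L: "mact GM mr r' w = (\<Sum>p'\<in>B. \<Sum>p\<in>A. if path_tgt t p' = w \<and> path_tgt t p = fst p' then
        scale (r p * r' p') (eval_path X p' (eval_path X p (m (fst p)))) else 0)"
    unfolding G_act_def' B_def[symmetric]
    by (rule sum.cong[OF refl]) (auto simp: step vs.scale_sum_right mult.commute intro!: sum.cong)
  have inner: "(\<Sum>q\<in>C. if path_tgt t q = w \<and> path_concat t p p' = Some q then scale (r p * r' p') (eval_path X q (m (fst q))) else 0)
     = (if path_tgt t p' = w \<and> path_tgt t p = fst p' then
        scale (r p * r' p') (eval_path X p' (eval_path X p (m (fst p)))) else 0)"
    if "p \<in> A" "p' \<in> B" for p p'
  proof (cases "path_tgt t p = fst p'")
    case True
    have ccC: "cc (p, p') \<in> C" using that unfolding C_def by auto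
    have "(\<Sum>q\<in>C. if path_tgt t q = w \<and> path_concat t p p' = Some q then scale (r p * r' p') (eval_path X q (m (fst q))) else 0)
      = (\<Sum>q\<in>C. if q = cc (p, p') then (if path_tgt t q = w then scale (r p * r' p') (eval_path X q (m (fst q))) else 0) else 0)"
      by (rule sum.cong[OF refl]) (auto simp: concat_Some True cc_def)
    also have "\<dots> = (if path_tgt t (cc (p, p')) = w then scale (r p * r' p') (eval_path X (cc (p,p')) (m (fst (cc (p,p'))))) else 0)"
      using fC ccC by (simp add: sum.delta)
    also have "\<dots> = (if path_tgt t p' = w \<and> path_tgt t p = fst p' then
        scale (r p * r' p') (eval_path X p' (eval_path X p (m (fst p)))) else 0)"
      using True tgt_append[OF True] by (simp add: cc_def eval_append')
    finally show ?thesis .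
  next
    case False then show ?thesis by (auto simp: concat_Some intro!: sum.neutral)
  qed
  have R: "mact GM m (path_alg_mult t r r') w = (\<Sum>p\<in>A. \<Sum>p'\<in>B. if path_tgt t p' = w \<and> path_tgt t p = fst p' then
        scale (r p * r' p') (eval_path X p' (eval_path X p (m (fst p)))) else 0)"
  proof -
    have "mact GM m (path_alg_mult t r r') w = (\<Sum>q\<in>C. if path_tgt t q = w then scale (path_alg_mult t r r' q) (eval_path X q (m (fst q))) else 0)"
      by (rule G_act_superset[OF fC suppC])
    also have "\<dots> = (\<Sum>q\<in>C. \<Sum>p\<in>A. \<Sum>p'\<in>B. if path_tgt t q = w \<and> path_concat t p p' = Some q then scale (r p * r' p') (eval_path X q (m (fst q))) else 0)"
      unfolding rr' by (auto simp: vs.scale_sum_left intro!: sum.cong)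
    also have "\<dots> = (\<Sum>p\<in>A. \<Sum>p'\<in>B. \<Sum>q\<in>C. if path_tgt t q = w \<and> path_concat t p p' = Some q then scale (r p * r' p') (eval_path X q (m (fst q))) else 0)"
      by (subst sum.swap, rule sum.cong[OF refl], subst sum.swap, rule refl)
    also have "\<dots> = (\<Sum>p\<in>A. \<Sum>p'\<in>B. if path_tgt t p' = w \<and> path_tgt t p = fst p' then
        scale (r p * r' p') (eval_path X p' (eval_path X p (m (fst p)))) else 0)"
      by (rule sum.cong[OF refl], rule sum.cong[OF refl], rule inner)
    finally show ?thesis .
  qed
  show "mact GM (mact GM m r) r' w = mact GM m (path_alg_mult t r r') w"
    unfolding mr_def[symmetric] L R by (rule sum.swap)
qed

end

context qrep begin
lemma GM_rmodule: "rmodule PR GM"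
proof -
  have inv: "\<exists>y\<in>mcarrier GM. madd GM x y = mzero GM" if x: "x \<in> mcarrier GM" for x
  proof (intro bexI)
    show "madd GM x (\<lambda>v. - x v) = mzero GM" by (simp add: GM_simps)
    have "- x v \<in> V v" if "v \<in> Q0" for v
      using x that vs.subspace_neg[OF subsp] by (auto simp: GM_carrier)
    then show "(\<lambda>v. - x v) \<in> mcarrier GM" using x by (auto simp: GM_carrier)
  qed
  have add: "madd GM x y \<in> mcarrier GM" if "x \<in> mcarrier GM" "y \<in> mcarrier GM" for x y
  proof -
    have "{v. x v + y v \<noteq> 0} \<subseteq> {v. x v \<noteq> 0} \<union> {v. y v \<noteq> 0}" by auto
    then show ?thesis using that vs.subspace_add[OF subsp] by (auto simp: GM_carrier GM_simps intro: finite_subset)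
  qed
  have c1: "mzero GM \<in> mcarrier GM" using V0 by (simp add: GM_carrier GM_simps)
  have c3: "madd GM (madd GM x y) z = madd GM x (madd GM y z)" for x y z
    by (simp add: GM_simps add.assoc)
  have c4: "madd GM x y = madd GM y x" for x y
    by (simp add: GM_simps add.commute)
  have c5: "madd GM (mzero GM) x = x" for x
    by (simp add: GM_simps)
  have c8: "mact GM (madd GM x y) r = madd GM (mact GM x r) (mact GM y r)"
    if "x \<in> mcarrier GM" "y \<in> mcarrier GM" "r \<in> PC" for x y r
    using G_act_addm[OF that] by (simp add: GM_simps)
  have c9: "mact GM x (radd PR r r') = madd GM (mact GM x r) (mact GM x r')"
    if "r \<in> PC" "r' \<in> PC" for x r r'
    using G_act_addr[OF that] by (simp add: GM_simps PR_simps)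
  have c10: "mact GM (mact GM x r) r' = mact GM x (rmult PR r r')"
    if "x \<in> mcarrier GM" "r \<in> PC" "r' \<in> PC" for x r r'
    using G_act_assoc[OF that] by (simp add: PR_simps)
  show ?thesis unfolding rmodule_def PR_simps(1)
    apply (intro conjI ballI)
    subgoal by (rule c1)
    subgoal by (rule add)
    subgoal by (rule c3)
    subgoal by (rule c4)
    subgoal by (rule c5)
    subgoal by (rule inv)
    subgoal by (rule G_act_in)
    subgoal by (rule c8)
    subgoal by (rule c9)
    subgoal by (rule c10)
    done
qed

end

lemma supp_sc: "{q. sc c p q \<noteq> 0} = (if c = 0 then {} else {p})"
  unfolding sc_def by auto

lemma mult_zeroL: "path_alg_mult t (\<lambda>_. 0) h = (\<lambda>_. 0)"
  unfolding path_alg_mult_def by simp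

lemma mult_sc_right:
  assumes "finite {q. n q \<noteq> 0}"
  shows "path_alg_mult t n (sc c p0) q = (\<Sum>p1\<in>{q. n q \<noteq> 0}. if path_concat t p1 p0 = Some q then n p1 * c else 0)"
  by (subst mult_superset[OF assms, of "{p0}"]) (auto simp: sc_def cong: if_cong)

lemma mult_sc_sc:
  "path_alg_mult t (sc c p) (sc d q) = (if path_tgt t p = fst q then sc (c * d) (fst p, snd p @ snd q) else (\<lambda>_. 0))"
proof (rule ext)
  fix r
  have "path_alg_mult t (sc c p) (sc d q) r = (\<Sum>p1\<in>{p}. \<Sum>p2\<in>{q}. if path_concat t p1 p2 = Some r then sc c p p1 * sc d q p2 else 0)"
    by (rule mult_superset) (auto simp: sc_def)
  then show "path_alg_mult t (sc c p) (sc d q) r = (if path_tgt t p = fst q then sc (c * d) (fst p, snd p @ snd q) else (\<lambda>_. 0)) r"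
    by (auto simp: sc_def concat_Some)
qed

lemma mult_addL:
  assumes "finite {q. f q \<noteq> 0}" "finite {q. g q \<noteq> 0}" "finite {q. h q \<noteq> 0}"
  shows "path_alg_mult t (\<lambda>p. f p + g p) h = (\<lambda>p. path_alg_mult t f h p + path_alg_mult t g h p)"
proof (rule ext)
  fix p
  let ?A = "{q. f q \<noteq> 0} \<union> {q. g q \<noteq> 0}"
  have fA: "finite ?A" using assms by simp
  have s: "{q. f q + g q \<noteq> 0} \<subseteq> ?A" by auto
  have e1: "path_alg_mult t f h p = (\<Sum>p1\<in>?A. \<Sum>p2\<in>{q. h q \<noteq> 0}. if path_concat t p1 p2 = Some p then f p1 * h p2 else 0)"
    by (rule mult_superset[OF fA assms(3)]) auto
  have e2: "path_alg_mult t g h p = (\<Sum>p1\<in>?A. \<Sum>p2\<in>{q. h q \<noteq> 0}. if path_concat t p1 p2 = Some p then g p1 * h p2 else 0)"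
    by (rule mult_superset[OF fA assms(3)]) auto
  show "path_alg_mult t (\<lambda>p. f p + g p) h p = path_alg_mult t f h p + path_alg_mult t g h p"
    unfolding mult_superset[OF fA assms(3) s order_refl] e1 e2
    by (auto simp: sum.distrib[symmetric] distrib_right intro!: sum.cong)
qed

lemma mult_scaleL:
  assumes "finite {q. f q \<noteq> 0}" "finite {q. h q \<noteq> 0}"
  shows "path_alg_mult t (\<lambda>p. c * f p) h = (\<lambda>p. c * path_alg_mult t f h p)"
proof (rule ext)
  fix p
  have s: "{q. c * f q \<noteq> 0} \<subseteq> {q. f q \<noteq> 0}" by auto
  show "path_alg_mult t (\<lambda>p. c * f p) h p = c * path_alg_mult t f h p"
    unfolding mult_superset[OF assms(1,2) s order_refl] mult_superset[OF assms(1,2) order_refl order_refl]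
    by (auto simp: sum_distrib_left intro!: sum.cong)
qed

lemma mult_nonzero:
  assumes "path_alg_mult t f g q \<noteq> 0"
  shows "\<exists>p1 p2. f p1 \<noteq> 0 \<and> g p2 \<noteq> 0 \<and> path_concat t p1 p2 = Some q"
proof (rule ccontr)
  assume "\<not> ?thesis"
  then have "path_alg_mult t f g q = 0" unfolding path_alg_mult_def by (intro sum.neutral ballI) auto
  then show False using assms by simp
qed

lemma supp_mult_subset:
  "{q. path_alg_mult t f g q \<noteq> 0} \<subseteq> (\<lambda>(p1, p2). (fst p1, snd p1 @ snd p2)) ` ({q. f q \<noteq> 0} \<times> {q. g q \<noteq> 0})"
proof
  fix r assume "r \<in> {q. path_alg_mult t f g q \<noteq> 0}"
  then obtain p1 p2 where "f p1 \<noteq> 0" "g p2 \<noteq> 0" "path_concat t p1 p2 = Some r" using mult_nonzero by blast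
  then show "r \<in> (\<lambda>(p1, p2). (fst p1, snd p1 @ snd p2)) ` ({q. f q \<noteq> 0} \<times> {q. g q \<noteq> 0})"
    by (intro image_eqI[where x="(p1,p2)"]) (auto simp: concat_Some)
qed

lemma mult_tgt:
  assumes "path_alg_mult t f g q \<noteq> 0" "\<And>p. g p \<noteq> 0 \<Longrightarrow> path_tgt t p = w"
  shows "path_tgt t q = w"
proof -
  obtain p1 p2 where "f p1 \<noteq> 0" "g p2 \<noteq> 0" "path_concat t p1 p2 = Some q" using mult_nonzero[OF assms(1)] by blast
  then show ?thesis using assms(2) tgt_append by (fastforce simp: concat_Some)
qed

lemma mult_in:
  assumes q: "quiver Q0 Q1 s t" and f: "f \<in> path_alg_carrier Q0 Q1 s t" and g: "g \<in> path_alg_carrier Q0 Q1 s t"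
  shows "path_alg_mult t f g \<in> path_alg_carrier Q0 Q1 s t"
proof -
  let ?A = "{q. f q \<noteq> 0}" and ?B = "{q. g q \<noteq> 0}"
  have fin: "finite ?A" "finite ?B" using f g by (auto simp: path_alg_carrier_def)
  have "{q. path_alg_mult t f g q \<noteq> 0} \<subseteq> (\<lambda>(p1, p2). (fst p1, snd p1 @ snd p2)) ` (?A \<times> ?B)"
    by (rule supp_mult_subset)
  then have 1: "finite {q. path_alg_mult t f g q \<noteq> 0}" using fin by (auto intro: finite_subset)
  have 2: "is_path Q0 Q1 s t r" if ne: "path_alg_mult t f g r \<noteq> 0" for r
  proof -
    obtain p1 p2 where "f p1 \<noteq> 0" "g p2 \<noteq> 0" "path_concat t p1 p2 = Some r" using mult_nonzero[OF ne] by blast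
    moreover have "is_path Q0 Q1 s t p1" "is_path Q0 Q1 s t p2" using f g \<open>f p1 \<noteq> 0\<close> \<open>g p2 \<noteq> 0\<close>
      unfolding path_alg_carrier_def by blast+
    ultimately show ?thesis using is_path_append'[OF q] by (auto simp: concat_Some)
  qed
  show ?thesis using 1 2 by (simp add: path_alg_carrier_def)
qed

lemma mult_assoc:
  fixes f g h :: "'v \<times> 'a list \<Rightarrow> 'k::field"
  assumes fA: "finite {q. f q \<noteq> 0}" and fB: "finite {q. g q \<noteq> 0}" and fC: "finite {q. h q \<noteq> 0}"
  shows "path_alg_mult t (path_alg_mult t f g) h = path_alg_mult t f (path_alg_mult t g h)"
proof (rule ext)
  fix q
  define A where "A = {q. f q \<noteq> 0}"
  define B where "B = {q. g q \<noteq> 0}"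
  define C where "C = {q. h q \<noteq> 0}"
  define cc :: "('v \<times> 'a list) \<times> ('v \<times> 'a list) \<Rightarrow> 'v \<times> 'a list"
    where "cc = (\<lambda>(p1, p2). (fst p1, snd p1 @ snd p2))"
  define AB where "AB = cc ` (A \<times> B)"
  define BC where "BC = cc ` (B \<times> C)"
  have fin: "finite A" "finite B" "finite C" "finite AB" "finite BC"
    using fA fB fC by (auto simp: A_def B_def C_def AB_def BC_def)
  have sAB: "{q. path_alg_mult t f g q \<noteq> 0} \<subseteq> AB"
    using supp_mult_subset unfolding AB_def A_def B_def cc_def .
  have sBC: "{q. path_alg_mult t g h q \<noteq> 0} \<subseteq> BC"
    using supp_mult_subset unfolding BC_def C_def B_def cc_def .
  have fg: "path_alg_mult t f g r = (\<Sum>p1\<in>A. \<Sum>p2\<in>B. if path_concat t p1 p2 = Some r then f p1 * g p2 else 0)" for r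
    by (rule mult_superset) (use fin in \<open>auto simp: A_def B_def\<close>)
  have gh: "path_alg_mult t g h r = (\<Sum>p2\<in>B. \<Sum>p3\<in>C. if path_concat t p2 p3 = Some r then g p2 * h p3 else 0)" for r
    by (rule mult_superset) (use fin in \<open>auto simp: C_def B_def\<close>)
  have L: "path_alg_mult t (path_alg_mult t f g) h q =
     (\<Sum>p1\<in>A. \<Sum>p2\<in>B. \<Sum>p3\<in>C. if path_tgt t p1 = fst p2 \<and> path_concat t (cc (p1, p2)) p3 = Some q then f p1 * g p2 * h p3 else 0)"
  proof -
    have "path_alg_mult t (path_alg_mult t f g) h q = (\<Sum>r\<in>AB. \<Sum>p3\<in>C. if path_concat t r p3 = Some q then path_alg_mult t f g r * h p3 else 0)"
      by (rule mult_superset) (use fin sAB in \<open>auto simp: C_def\<close>)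
    also have "\<dots> = (\<Sum>r\<in>AB. \<Sum>p3\<in>C. \<Sum>p1\<in>A. \<Sum>p2\<in>B. if path_concat t r p3 = Some q \<and> path_concat t p1 p2 = Some r then f p1 * g p2 * h p3 else 0)"
      unfolding fg by (auto simp: sum_distrib_right intro!: sum.cong)
    also have "\<dots> = (\<Sum>p1\<in>A. \<Sum>p2\<in>B. \<Sum>p3\<in>C. \<Sum>r\<in>AB. if path_concat t r p3 = Some q \<and> path_concat t p1 p2 = Some r then f p1 * g p2 * h p3 else 0)"
      (is "(\<Sum>r\<in>AB. \<Sum>p3\<in>C. \<Sum>p1\<in>A. \<Sum>p2\<in>B. ?F r p3 p1 p2) = _")
    proof -
      have "(\<Sum>r\<in>AB. \<Sum>p3\<in>C. \<Sum>p1\<in>A. \<Sum>p2\<in>B. ?F r p3 p1 p2) = (\<Sum>p3\<in>C. \<Sum>r\<in>AB. \<Sum>p1\<in>A. \<Sum>p2\<in>B. ?F r p3 p1 p2)"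
        by (rule sum.swap)
      also have "\<dots> = (\<Sum>p3\<in>C. \<Sum>p1\<in>A. \<Sum>r\<in>AB. \<Sum>p2\<in>B. ?F r p3 p1 p2)"
        by (rule sum.cong[OF refl], rule sum.swap)
      also have "\<dots> = (\<Sum>p3\<in>C. \<Sum>p1\<in>A. \<Sum>p2\<in>B. \<Sum>r\<in>AB. ?F r p3 p1 p2)"
        by (rule sum.cong[OF refl], rule sum.cong[OF refl], rule sum.swap)
      also have "\<dots> = (\<Sum>p1\<in>A. \<Sum>p3\<in>C. \<Sum>p2\<in>B. \<Sum>r\<in>AB. ?F r p3 p1 p2)"
        by (rule sum.swap)
      also have "\<dots> = (\<Sum>p1\<in>A. \<Sum>p2\<in>B. \<Sum>p3\<in>C. \<Sum>r\<in>AB. ?F r p3 p1 p2)"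
        by (rule sum.cong[OF refl], rule sum.swap)
      finally show ?thesis .
    qed
    also have "\<dots> = (\<Sum>p1\<in>A. \<Sum>p2\<in>B. \<Sum>p3\<in>C. if path_tgt t p1 = fst p2 \<and> path_concat t (cc (p1, p2)) p3 = Some q then f p1 * g p2 * h p3 else 0)"
    proof (intro sum.cong[OF refl])
      fix p1 p2 p3 assume "p1 \<in> A" "p2 \<in> B" "p3 \<in> C"
      then have cc: "cc (p1, p2) \<in> AB" unfolding AB_def by auto
      have "(\<Sum>r\<in>AB. if path_concat t r p3 = Some q \<and> path_concat t p1 p2 = Some r then f p1 * g p2 * h p3 else 0)
        = (\<Sum>r\<in>AB. if r = cc (p1, p2) then (if path_tgt t p1 = fst p2 \<and> path_concat t r p3 = Some q then f p1 * g p2 * h p3 else 0) else 0)"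
        by (rule sum.cong[OF refl]) (auto simp: concat_Some cc_def)
      also have "\<dots> = (if path_tgt t p1 = fst p2 \<and> path_concat t (cc (p1, p2)) p3 = Some q then f p1 * g p2 * h p3 else 0)"
        using fin cc by (simp add: sum.delta)
      finally show "(\<Sum>r\<in>AB. if path_concat t r p3 = Some q \<and> path_concat t p1 p2 = Some r then f p1 * g p2 * h p3 else 0) = \<dots>" .
    qed
    finally show ?thesis .
  qed
  have R: "path_alg_mult t f (path_alg_mult t g h) q =
     (\<Sum>p1\<in>A. \<Sum>p2\<in>B. \<Sum>p3\<in>C. if path_tgt t p2 = fst p3 \<and> path_concat t p1 (cc (p2, p3)) = Some q then f p1 * g p2 * h p3 else 0)"
  proof -
    have "path_alg_mult t f (path_alg_mult t g h) q = (\<Sum>p1\<in>A. \<Sum>r\<in>BC. if path_concat t p1 r = Some q then f p1 * path_alg_mult t g h r else 0)"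
      by (rule mult_superset) (use fin sBC in \<open>auto simp: A_def\<close>)
    also have "\<dots> = (\<Sum>p1\<in>A. \<Sum>r\<in>BC. \<Sum>p2\<in>B. \<Sum>p3\<in>C. if path_concat t p1 r = Some q \<and> path_concat t p2 p3 = Some r then f p1 * g p2 * h p3 else 0)"
      unfolding gh by (auto simp: sum_distrib_left mult.assoc intro!: sum.cong)
    also have "\<dots> = (\<Sum>p1\<in>A. \<Sum>p2\<in>B. \<Sum>p3\<in>C. \<Sum>r\<in>BC. if path_concat t p1 r = Some q \<and> path_concat t p2 p3 = Some r then f p1 * g p2 * h p3 else 0)"
      (is "(\<Sum>p1\<in>A. \<Sum>r\<in>BC. \<Sum>p2\<in>B. \<Sum>p3\<in>C. ?F p1 r p2 p3) = _")
    proof -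
      have "(\<Sum>p1\<in>A. \<Sum>r\<in>BC. \<Sum>p2\<in>B. \<Sum>p3\<in>C. ?F p1 r p2 p3) = (\<Sum>p1\<in>A. \<Sum>p2\<in>B. \<Sum>r\<in>BC. \<Sum>p3\<in>C. ?F p1 r p2 p3)"
        by (rule sum.cong[OF refl], rule sum.swap)
      also have "\<dots> = (\<Sum>p1\<in>A. \<Sum>p2\<in>B. \<Sum>p3\<in>C. \<Sum>r\<in>BC. ?F p1 r p2 p3)"
        by (rule sum.cong[OF refl], rule sum.cong[OF refl], rule sum.swap)
      finally show ?thesis .
    qed
    also have "\<dots> = (\<Sum>p1\<in>A. \<Sum>p2\<in>B. \<Sum>p3\<in>C. if path_tgt t p2 = fst p3 \<and> path_concat t p1 (cc (p2, p3)) = Some q then f p1 * g p2 * h p3 else 0)"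
    proof (intro sum.cong[OF refl])
      fix p1 p2 p3 assume "p1 \<in> A" "p2 \<in> B" "p3 \<in> C"
      then have cc: "cc (p2, p3) \<in> BC" unfolding BC_def by auto
      have "(\<Sum>r\<in>BC. if path_concat t p1 r = Some q \<and> path_concat t p2 p3 = Some r then f p1 * g p2 * h p3 else 0)
        = (\<Sum>r\<in>BC. if r = cc (p2, p3) then (if path_tgt t p2 = fst p3 \<and> path_concat t p1 r = Some q then f p1 * g p2 * h p3 else 0) else 0)"
        by (rule sum.cong[OF refl]) (auto simp: concat_Some cc_def)
      also have "\<dots> = (if path_tgt t p2 = fst p3 \<and> path_concat t p1 (cc (p2, p3)) = Some q then f p1 * g p2 * h p3 else 0)"
        using fin cc by (simp add: sum.delta)
      finally show "(\<Sum>r\<in>BC. if path_concat t p1 r = Some q \<and> path_concat t p2 p3 = Some r then f p1 * g p2 * h p3 else 0) = \<dots>" .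
    qed
    finally show ?thesis .
  qed
  have eq: "(path_tgt t p1 = fst p2 \<and> path_concat t (cc (p1, p2)) p3 = Some q) \<longleftrightarrow>
            (path_tgt t p2 = fst p3 \<and> path_concat t p1 (cc (p2, p3)) = Some q)" for p1 p2 p3
    unfolding concat_Some cc_def using tgt_append[of t p1 p2] by auto
  show "path_alg_mult t (path_alg_mult t f g) h q = path_alg_mult t f (path_alg_mult t g h) q"
    unfolding L R eq ..
qed

definition transp :: "('m \<Rightarrow> 'n) \<Rightarrow> ('m, 'r) rmod \<Rightarrow> ('n, 'r) rmod" where
  "transp \<phi> M = \<lparr> mcarrier = \<phi> ` mcarrier M, mzero = \<phi> (mzero M),
     madd = (\<lambda>a b. \<phi> (madd M (inv_into (mcarrier M) \<phi> a) (inv_into (mcarrier M) \<phi> b))),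
     mact = (\<lambda>a r. \<phi> (mact M (inv_into (mcarrier M) \<phi> a) r)) \<rparr>"

lemma transp_simps:
  "mcarrier (transp \<phi> M) = \<phi> ` mcarrier M" "mzero (transp \<phi> M) = \<phi> (mzero M)"
  "madd (transp \<phi> M) a b = \<phi> (madd M (inv_into (mcarrier M) \<phi> a) (inv_into (mcarrier M) \<phi> b))"
  "mact (transp \<phi> M) a r = \<phi> (mact M (inv_into (mcarrier M) \<phi> a) r)"
  unfolding transp_def by simp_all

lemma transp_rmodule:
  assumes M: "rmodule R M" and inj: "inj_on \<phi> (mcarrier M)"
  shows "rmodule R (transp \<phi> M)"
proof -
  let ?\<psi> = "inv_into (mcarrier M) \<phi>"
  have ii[simp]: "?\<psi> (\<phi> x) = x" if "x \<in> mcarrier M" for x using inv_into_f_f[OF inj that] .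
  note ax = M[unfolded rmodule_def]
  have z: "mzero M \<in> mcarrier M" and ad: "\<And>x y. x \<in> mcarrier M \<Longrightarrow> y \<in> mcarrier M \<Longrightarrow> madd M x y \<in> mcarrier M"
    and ac: "\<And>x r. x \<in> mcarrier M \<Longrightarrow> r \<in> rcarrier R \<Longrightarrow> mact M x r \<in> mcarrier M"
    using ax by auto
  show ?thesis unfolding rmodule_def transp_simps
    using ax z ad ac by (auto simp: image_iff) (metis ii)+
qed

lemma transp_hom_into:
  assumes "mod_hom R N M f" "inj_on \<phi> (mcarrier M)"
  shows "mod_hom R N (transp \<phi> M) (\<phi> \<circ> f)"
  using assms unfolding mod_hom_def transp_simps by (auto simp: inv_into_f_f)

lemma transp_hom_from:
  assumes "mod_hom R M N f" "inj_on \<phi> (mcarrier M)" "\<And>x. x \<in> mcarrier M \<Longrightarrow> h (\<phi> x) = f x"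
    "rmodule R M"
  shows "mod_hom R (transp \<phi> M) N h"
proof -
  have c: "\<And>x y. x \<in> mcarrier M \<Longrightarrow> y \<in> mcarrier M \<Longrightarrow> madd M x y \<in> mcarrier M"
    and a: "\<And>x r. x \<in> mcarrier M \<Longrightarrow> r \<in> rcarrier R \<Longrightarrow> mact M x r \<in> mcarrier M"
    using assms(4) unfolding rmodule_def by auto
  show ?thesis using assms(1,2,3) c a unfolding mod_hom_def transp_simps by (auto simp: inv_into_f_f)
qed

lemma transp_hom_back:
  assumes "mod_hom R (transp \<phi> M) N q" "inj_on \<phi> (mcarrier M)"
  shows "mod_hom R M N (q \<circ> \<phi>)"
  using assms unfolding mod_hom_def transp_simps by (auto simp: inv_into_f_f)


declare split_paired_All[simp del] split_paired_Ex[simp del]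

lemma sum_fun_apply: "(\<Sum>i\<in>I. f i) x = (\<Sum>i\<in>I. f i x)"
  by (induction I rule: infinite_finite_induct) auto

definition scY :: "('k \<Rightarrow> 'x \<Rightarrow> 'x) \<Rightarrow> 'k \<Rightarrow> ('p \<Rightarrow> 'k::field) \<times> 'x \<Rightarrow> ('p \<Rightarrow> 'k) \<times> 'x" where
  "scY scale c y = ((\<lambda>q. c * fst y q), scale c (snd y))"

definition resv :: "('a \<Rightarrow> 'v) \<Rightarrow> 'v \<Rightarrow> ('v \<times> 'a list \<Rightarrow> 'k::zero) \<Rightarrow> ('v \<times> 'a list \<Rightarrow> 'k)" where
  "resv t v n = (\<lambda>q. if path_tgt t q = v then n q else 0)"

lemma mult_e:
  assumes "finite {q. n q \<noteq> 0}"
  shows "path_alg_mult t n (sc c (v, [])) = (\<lambda>q. if path_tgt t q = v then n q * c else 0)"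
proof (rule ext)
  fix q
  have "path_alg_mult t n (sc c (v, [])) q = (\<Sum>p1\<in>{q. n q \<noteq> 0}. if p1 = q then (if path_tgt t q = v then n p1 * c else 0) else 0)"
    unfolding mult_sc_right[OF assms] by (rule sum.cong[OF refl]) (auto simp: concat_Some)
  also have "\<dots> = (if path_tgt t q = v then n q * c else 0)"
    using assms by (simp add: sum.delta')
  finally show "path_alg_mult t n (sc c (v, [])) q = (if path_tgt t q = v then n q * c else 0)" .
qed

context qrep begin

lemma G_act_sc: "mact GM m (sc c p) = (\<lambda>w. if path_tgt t p = w then scale c (eval_path X p (m (fst p))) else 0)"
proof (rule ext)
  fix w
  show "mact GM m (sc c p) w = (if path_tgt t p = w then scale c (eval_path X p (m (fst p))) else 0)"
    by (subst G_act_superset[of "{p}"]) (auto simp: sc_def)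
qed

lemma zero_PC: "(\<lambda>_. 0) \<in> PC" by (simp add: PC_iff)

lemma add_PC: "f \<in> PC \<Longrightarrow> g \<in> PC \<Longrightarrow> (\<lambda>q. f q + g q) \<in> PC"
proof -
  assume a: "f \<in> PC" "g \<in> PC"
  have "{q. f q + g q \<noteq> 0} \<subseteq> {q. f q \<noteq> 0} \<union> {q. g q \<noteq> 0}" by auto
  then show ?thesis using a unfolding PC_iff by (auto intro: finite_subset)
qed

lemma scale_PC: "f \<in> PC \<Longrightarrow> (\<lambda>q. c * f q) \<in> PC"
proof -
  assume a: "f \<in> PC"
  have "{q. c * f q \<noteq> 0} \<subseteq> {q. f q \<noteq> 0}" by auto
  then show ?thesis using a unfolding PC_iff by (auto intro: finite_subset)
qed

lemma resv_PC: "f \<in> PC \<Longrightarrow> resv t v f \<in> PC"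
proof -
  assume a: "f \<in> PC"
  have "{q. resv t v f q \<noteq> 0} \<subseteq> {q. f q \<noteq> 0}" by (auto simp: resv_def)
  then show ?thesis using a unfolding PC_iff by (auto intro: finite_subset simp: resv_def split: if_splits)
qed

lemma sc_PC: "is_path Q0 Q1 s t p \<Longrightarrow> sc c p \<in> PC"
  unfolding PC_iff sc_def by (auto intro: finite_subset[of _ "{p}"])

lemma PC_fin: "f \<in> PC \<Longrightarrow> finite {q. f q \<noteq> 0}" by (simp add: PC_iff)

lemma PC_path: "f \<in> PC \<Longrightarrow> f q \<noteq> 0 \<Longrightarrow> is_path Q0 Q1 s t q" by (simp add: PC_iff)

lemma arrow_path: "a \<in> Q1 \<Longrightarrow> is_path Q0 Q1 s t (s a, [a])"
  by (simp add: is_path_Cons[OF quiv] is_path_Nil sQ0 tQ0)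

lemma mult_PC: "f \<in> PC \<Longrightarrow> g \<in> PC \<Longrightarrow> path_alg_mult t f g \<in> PC"
  using mult_in[OF quiv] by blast

end

locale cocyc = qrep Q0 Q1 s t scale V X
  for Q0 :: "'v set" and Q1 :: "'a set" and s t :: "'a \<Rightarrow> 'v"
    and scale :: "'k::field \<Rightarrow> 'x::ab_group_add \<Rightarrow> 'x"
    and V :: "'v \<Rightarrow> 'x set" and X :: "'a \<Rightarrow> 'x \<Rightarrow> 'x" +
  fixes g :: "'a \<Rightarrow> 'x \<Rightarrow> ('v \<times> 'a list \<Rightarrow> 'k)"
  assumes g_in: "\<And>a x. a \<in> Q1 \<Longrightarrow> x \<in> V (s a) \<Longrightarrow> g a x \<in> path_alg_carrier Q0 Q1 s t"
    and g_tgt: "\<And>a x q. a \<in> Q1 \<Longrightarrow> x \<in> V (s a) \<Longrightarrow> g a x q \<noteq> 0 \<Longrightarrow> path_tgt t q = t a"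
    and g_add: "\<And>a x y. a \<in> Q1 \<Longrightarrow> x \<in> V (s a) \<Longrightarrow> y \<in> V (s a) \<Longrightarrow> g a (x + y) = (\<lambda>q. g a x q + g a y q)"
    and g_scale: "\<And>a x c. a \<in> Q1 \<Longrightarrow> x \<in> V (s a) \<Longrightarrow> g a (scale c x) = (\<lambda>q. c * g a x q)"
begin

lemma g0: "a \<in> Q1 \<Longrightarrow> g a 0 = (\<lambda>_. 0)"
proof (rule ext)
  fix q assume a: "a \<in> Q1"
  have "g a 0 = (\<lambda>q. g a 0 q + g a 0 q)" using g_add[of a 0 0] V0[OF sQ0[OF a]] a by simp
  then have "g a 0 q = g a 0 q + g a 0 q" by (metis)
  then show "g a 0 q = 0" by (metis add_cancel_right_right)
qed

definition VY :: "'v \<Rightarrow> (('v \<times> 'a list \<Rightarrow> 'k) \<times> 'x) set" where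
  "VY v = {y. fst y \<in> PC \<and> (\<forall>q. fst y q \<noteq> 0 \<longrightarrow> path_tgt t q = v) \<and> snd y \<in> V v}"

definition XY :: "'a \<Rightarrow> ('v \<times> 'a list \<Rightarrow> 'k) \<times> 'x \<Rightarrow> ('v \<times> 'a list \<Rightarrow> 'k) \<times> 'x" where
  "XY a y = ((\<lambda>q. path_alg_mult t (fst y) (sc 1 (s a, [a])) q + g a (snd y) q), X a (snd y))"

lemma arr_in: "a \<in> Q1 \<Longrightarrow> n \<in> PC \<Longrightarrow> path_alg_mult t n (sc 1 (s a, [a])) \<in> PC"
  using mult_PC sc_PC arrow_path by blast

lemma arr_tgt: "path_alg_mult t n (sc 1 (s a, [a])) q \<noteq> 0 \<Longrightarrow> path_tgt t q = t a"
  by (rule mult_tgt) (auto simp: sc_def path_tgt_def split: if_splits)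

lemma vsY: "module (scY scale)"
  by unfold_locales (auto simp: scY_def fun_eq_iff algebra_simps vs.scale_right_distrib vs.scale_left_distrib)

lemma rep_Y: "representation Q0 Q1 s t (scY scale) VY XY"
  unfolding representation_def
proof (intro conjI ballI allI)
  show "vector_space (scY scale)" using vsY by (simp add: module_iff_vector_space)
next
  fix v assume v: "v \<in> Q0"
  show "module.subspace (scY scale) (VY v)"
    unfolding module.subspace_def[OF vsY] VY_def
  proof (intro conjI ballI allI)
    show "0 \<in> {y. fst y \<in> PC \<and> (\<forall>q. fst y q \<noteq> 0 \<longrightarrow> path_tgt t q = v) \<and> snd y \<in> V v}"
      using zero_PC V0[OF v] by (simp add: zero_fun_def)
  next
    fix x y assume xy: "x \<in> {y. fst y \<in> PC \<and> (\<forall>q. fst y q \<noteq> 0 \<longrightarrow> path_tgt t q = v) \<and> snd y \<in> V v}"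
      "y \<in> {y. fst y \<in> PC \<and> (\<forall>q. fst y q \<noteq> 0 \<longrightarrow> path_tgt t q = v) \<and> snd y \<in> V v}"
    have "fst x + fst y \<in> PC" using add_PC xy by (simp add: plus_fun_def)
    moreover have "\<forall>q. (fst x + fst y) q \<noteq> 0 \<longrightarrow> path_tgt t q = v"
    proof (intro allI impI)
      fix q assume "(fst x + fst y) q \<noteq> 0"
      then have "fst x q \<noteq> 0 \<or> fst y q \<noteq> 0" by (auto simp: plus_fun_def)
      then show "path_tgt t q = v" using xy by blast
    qed
    moreover have "snd x + snd y \<in> V v" using xy vs.subspace_add[OF subsp[OF v]] by simp
    ultimately show "x + y \<in> {y. fst y \<in> PC \<and> (\<forall>q. fst y q \<noteq> 0 \<longrightarrow> path_tgt t q = v) \<and> snd y \<in> V v}"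
      by simp
  next
    fix c x assume x: "x \<in> {y. fst y \<in> PC \<and> (\<forall>q. fst y q \<noteq> 0 \<longrightarrow> path_tgt t q = v) \<and> snd y \<in> V v}"
    then show "scY scale c x \<in> {y. fst y \<in> PC \<and> (\<forall>q. fst y q \<noteq> 0 \<longrightarrow> path_tgt t q = v) \<and> snd y \<in> V v}"
      using scale_PC vs.subspace_scale[OF subsp[OF v]] by (auto simp: scY_def)
  qed
next
  fix a x assume a: "a \<in> Q1" and x: "x \<in> VY (s a)"
  have "\<forall>q. fst (XY a x) q \<noteq> 0 \<longrightarrow> path_tgt t q = t a"
  proof (intro allI impI)
    fix q assume "fst (XY a x) q \<noteq> 0"
    then have "path_alg_mult t (fst x) (sc 1 (s a, [a])) q \<noteq> 0 \<or> g a (snd x) q \<noteq> 0" by (auto simp: XY_def)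
    then show "path_tgt t q = t a" using arr_tgt[of "fst x" a q] g_tgt[OF a, of "snd x" q] x unfolding VY_def by blast
  qed
  then show "XY a x \<in> VY (t a)"
    using x arr_in[OF a] g_in[OF a] add_PC X_in[OF a] by (auto simp: VY_def XY_def)
next
  fix a x y assume a: "a \<in> Q1" and xy: "x \<in> VY (s a)" "y \<in> VY (s a)"
  have m: "path_alg_mult t (fst x + fst y) (sc 1 (s a, [a])) = (\<lambda>q. path_alg_mult t (fst x) (sc 1 (s a, [a])) q + path_alg_mult t (fst y) (sc 1 (s a, [a])) q)"
    using mult_addL[of "fst x" "fst y" "sc 1 (s a, [a])" t] xy PC_fin sc_PC[OF arrow_path[OF a]]
    by (auto simp: VY_def plus_fun_def)
  show "XY a (x + y) = XY a x + XY a y"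
    using xy g_add[OF a] X_add[OF a] by (auto simp: XY_def VY_def m fun_eq_iff)
next
  fix a c x assume a: "a \<in> Q1" and x: "x \<in> VY (s a)"
  have m: "path_alg_mult t (\<lambda>q. c * fst x q) (sc 1 (s a, [a])) = (\<lambda>q. c * path_alg_mult t (fst x) (sc 1 (s a, [a])) q)"
    using mult_scaleL[of "fst x" "sc 1 (s a, [a])" t c] x PC_fin sc_PC[OF arrow_path[OF a]]
    by (auto simp: VY_def)
  show "XY a (scY scale c x) = scY scale c (XY a x)"
    using x g_scale[OF a] X_scale[OF a] by (auto simp: XY_def VY_def scY_def m fun_eq_iff algebra_simps)
qed

sublocale Y: qrep Q0 Q1 s t "scY scale" VY XY
  by unfold_locales (fact quiv, fact rep_Y)

end


declare split_paired_All[simp del] split_paired_Ex[simp del]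

lemma RM_simps: "mcarrier (regular_module Q0 Q1 s t) = path_alg_carrier Q0 Q1 s t"
  "madd (regular_module Q0 Q1 s t) = (\<lambda>f g p. f p + g p)"
  "mact (regular_module Q0 Q1 s t) = path_alg_mult t"
  "mzero (regular_module Q0 Q1 s t) = (\<lambda>p. 0)"
  unfolding regular_module_def by simp_all

context cocyc begin

abbreviation "GY \<equiv> G_module Q0 Q1 s t (scY scale) VY XY"
abbreviation "RM \<equiv> regular_module Q0 Q1 s t :: ('v \<times> 'a list \<Rightarrow> 'k, 'v \<times> 'a list \<Rightarrow> 'k) rmod"

definition iY :: "('v \<times> 'a list \<Rightarrow> 'k) \<Rightarrow> 'v \<Rightarrow> ('v \<times> 'a list \<Rightarrow> 'k) \<times> 'x" where
  "iY n = (\<lambda>v. (resv t v n, 0))"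

definition Th :: "('v \<Rightarrow> ('v \<times> 'a list \<Rightarrow> 'k) \<times> 'x) \<Rightarrow> ('v \<times> 'a list \<Rightarrow> 'k) \<times> ('v \<Rightarrow> 'x)" where
  "Th y = ((\<lambda>q. fst (y (path_tgt t q)) q), (\<lambda>v. snd (y v)))"

definition dY :: "'v \<Rightarrow> ('v \<times> 'a list \<Rightarrow> 'k) \<times> 'x \<Rightarrow> 'v \<Rightarrow> ('v \<times> 'a list \<Rightarrow> 'k) \<times> 'x" where
  "dY v z = (\<lambda>w. if w = v then z else 0)"

lemma restr_id: "n \<in> PC \<Longrightarrow> (\<forall>q. n q \<noteq> 0 \<longrightarrow> path_tgt t q = v) \<Longrightarrow> path_alg_mult t n (sc 1 (v, [])) = n"
  using mult_e[OF PC_fin] by (fastforce simp: fun_eq_iff)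

lemma EY: "is_path Q0 Q1 s t (v, as) \<Longrightarrow> n \<in> PC \<Longrightarrow> (\<forall>q. n q \<noteq> 0 \<longrightarrow> path_tgt t q = v) \<Longrightarrow>
  eval_path XY (v, as) (n, 0) = (path_alg_mult t n (sc 1 (v, as)), 0)"
proof (induction as arbitrary: v n)
  case Nil
  then show ?case using restr_id by simp
next
  case (Cons a as)
  from Cons.prems(1) have a: "a \<in> Q1" "s a = v" "is_path Q0 Q1 s t (t a, as)" by (auto simp: is_path_Cons[OF quiv])
  define m where "m = path_alg_mult t n (sc 1 (s a, [a]))"
  have XYa: "XY a (n, 0) = (m, 0)" using g0[OF a(1)] X_zero[OF a(1)] by (simp add: XY_def m_def)
  have mPC: "m \<in> PC" using arr_in[OF a(1) Cons.prems(2)] by (simp add: m_def)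
  have mt: "\<forall>q. m q \<noteq> 0 \<longrightarrow> path_tgt t q = t a" using arr_tgt m_def by blast
  have "eval_path XY (v, a # as) (n, 0) = eval_path XY (t a, as) (m, 0)" using XYa by (simp add: eval_Cons[where w="t a"])
  also have "\<dots> = (path_alg_mult t m (sc 1 (t a, as)), 0)" using Cons.IH[OF a(3) mPC mt] .
  also have "path_alg_mult t m (sc 1 (t a, as)) = path_alg_mult t n (path_alg_mult t (sc 1 (s a,[a])) (sc 1 (t a, as)))"
    unfolding m_def by (rule mult_assoc) (use PC_fin[OF Cons.prems(2)] in \<open>simp_all add: supp_sc\<close>)
  also have "path_alg_mult t (sc 1 (s a,[a])) (sc 1 (t a, as)) = sc 1 (v, a # as)"
    using a(2) by (simp add: mult_sc_sc path_tgt_def)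
  finally show ?case .
qed

lemma EY': "is_path Q0 Q1 s t p \<Longrightarrow> n \<in> PC \<Longrightarrow> (\<forall>q. n q \<noteq> 0 \<longrightarrow> path_tgt t q = fst p) \<Longrightarrow>
  eval_path XY p (n, 0) = (path_alg_mult t n (sc 1 p), 0)"
  using EY[of "fst p" "snd p" n] by simp

lemma resv_tgt: "resv t v n q \<noteq> 0 \<Longrightarrow> path_tgt t q = v"
  unfolding resv_def by (auto split: if_splits)

lemma iY_in: "n \<in> PC \<Longrightarrow> iY n \<in> mcarrier GY"
proof -
  assume n: "n \<in> PC"
  have 1: "\<forall>v\<in>Q0. iY n v \<in> VY v"
    using n resv_PC resv_tgt V0 unfolding iY_def VY_def by auto
  have z: "resv t v n = (\<lambda>_. 0)" if "v \<notin> Q0" for v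
  proof (rule ext)
    fix q
    show "resv t v n q = 0"
    proof (rule ccontr)
      assume "resv t v n q \<noteq> 0"
      then have "n q \<noteq> 0" "path_tgt t q = v" unfolding resv_def by (auto split: if_splits)
      then show False using that PC_path[OF n] is_path_tgt'[OF quiv] by blast
    qed
  qed
  have 2: "\<forall>v. v \<notin> Q0 \<longrightarrow> iY n v = 0" using z by (simp add: iY_def zero_prod_def zero_fun_def)
  have "{v. iY n v \<noteq> 0} \<subseteq> path_tgt t ` {q. n q \<noteq> 0}"
  proof
    fix v assume "v \<in> {v. iY n v \<noteq> 0}"
    then have "resv t v n \<noteq> (\<lambda>_. 0)" by (auto simp: iY_def zero_prod_def zero_fun_def)
    then have "\<exists>q. resv t v n q \<noteq> 0" by (metis ext)
    then obtain q where "resv t v n q \<noteq> 0" by blast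
    then have "n q \<noteq> 0" "path_tgt t q = v" unfolding resv_def by (auto split: if_splits)
    then show "v \<in> path_tgt t ` {q. n q \<noteq> 0}" by auto
  qed
  then have 3: "finite {v. iY n v \<noteq> 0}" using PC_fin[OF n] finite_subset by blast
  show ?thesis using 1 2 3 by (simp add: Y.GM_carrier)
qed

lemma iY_act:
  assumes n: "n \<in> PC" and r: "r \<in> PC"
  shows "iY (path_alg_mult t n r) = mact GY (iY n) r"
proof (rule ext)
  fix w
  define A where "A = {q. n q \<noteq> 0}"
  define B where "B = {q. r q \<noteq> 0}"
  have fA: "finite A" and fB: "finite B" using n r PC_fin A_def B_def by auto
  have pB: "p \<in> B \<Longrightarrow> is_path Q0 Q1 s t p" for p using r PC_path B_def by auto
  define M where "M p = path_alg_mult t (resv t (fst p) n) (sc 1 p)" for p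
  have Mq: "M p q = (\<Sum>p1\<in>A. if path_concat t p1 p = Some q then n p1 else 0)" for p q
  proof -
    have "M p q = (\<Sum>p1\<in>A. \<Sum>p2\<in>{p}. if path_concat t p1 p2 = Some q then resv t (fst p) n p1 * sc 1 p p2 else 0)"
      unfolding M_def by (rule mult_superset) (use fA in \<open>auto simp: A_def resv_def sc_def\<close>)
    also have "\<dots> = (\<Sum>p1\<in>A. if path_concat t p1 p = Some q then n p1 else 0)"
      by (auto simp: sc_def resv_def concat_Some intro!: sum.cong)
    finally show ?thesis .
  qed
  have act: "mact GY (iY n) r w = (\<Sum>p\<in>B. if path_tgt t p = w then ((\<lambda>q. r p * M p q), 0) else 0)"
    unfolding Y.G_act_def' B_def[symmetric]
  proof (rule sum.cong[OF refl])
    fix p assume p: "p \<in> B"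
    have e: "eval_path XY p (iY n (fst p)) = (M p, 0)"
      unfolding iY_def M_def by (rule EY'[OF pB[OF p] resv_PC[OF n]]) (use resv_tgt in blast)
    show "(if path_tgt t p = w then scY scale (r p) (eval_path XY p (iY n (fst p))) else 0) =
        (if path_tgt t p = w then ((\<lambda>q. r p * M p q), 0) else 0)"
      unfolding e by (simp add: scY_def)
  qed
  have fsteq: "resv t w (path_alg_mult t n r) q = (\<Sum>p\<in>B. if path_tgt t p = w then r p * M p q else 0)" for q
  proof -
    have "resv t w (path_alg_mult t n r) q = (\<Sum>p1\<in>A. \<Sum>p\<in>B. if path_tgt t q = w \<and> path_concat t p1 p = Some q then n p1 * r p else 0)"
      unfolding resv_def path_alg_mult_def A_def[symmetric] B_def[symmetric] by (auto intro!: sum.neutral)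
    also have "\<dots> = (\<Sum>p\<in>B. \<Sum>p1\<in>A. if path_tgt t q = w \<and> path_concat t p1 p = Some q then n p1 * r p else 0)"
      by (rule sum.swap)
    also have "\<dots> = (\<Sum>p\<in>B. if path_tgt t p = w then r p * M p q else 0)"
    proof (rule sum.cong[OF refl])
      fix p assume "p \<in> B"
      have c: "path_concat t p1 p = Some q \<Longrightarrow> path_tgt t q = path_tgt t p" for p1
        using tgt_append[of t p1 p] by (auto simp: concat_Some)
      show "(\<Sum>p1\<in>A. if path_tgt t q = w \<and> path_concat t p1 p = Some q then n p1 * r p else 0) =
          (if path_tgt t p = w then r p * M p q else 0)"
      proof (cases "path_tgt t p = w")
        case True
        have "(if path_tgt t q = w \<and> path_concat t p1 p = Some q then n p1 * r p else 0) =
           r p * (if path_concat t p1 p = Some q then n p1 else 0)" for p1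
          using c[of p1] True by auto
        then show ?thesis unfolding Mq sum_distrib_left using True by simp
      next
        case False
        have "(if path_tgt t q = w \<and> path_concat t p1 p = Some q then n p1 * r p else 0) = 0" for p1
          using c[of p1] False by auto
        then show ?thesis using False by simp
      qed
    qed
    finally show ?thesis .
  qed
  show "iY (path_alg_mult t n r) w = mact GY (iY n) r w"
    unfolding act
  proof (rule prod_eqI)
    show "fst (iY (path_alg_mult t n r) w) = fst (\<Sum>p\<in>B. if path_tgt t p = w then (\<lambda>q. r p * M p q, 0) else 0)"
      unfolding fst_sum by (auto simp: iY_def fun_eq_iff sum_fun_apply fsteq intro!: sum.cong)
    show "snd (iY (path_alg_mult t n r) w) = snd (\<Sum>p\<in>B. if path_tgt t p = w then (\<lambda>q. r p * M p q, 0) else 0)"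
      unfolding snd_sum by (auto simp: iY_def intro!: sum.neutral)
  qed
qed

lemma iY_hom: "mod_hom PR RM GY iY"
  unfolding mod_hom_def RM_simps PR_simps
proof (intro conjI ballI)
  fix x assume "x \<in> PC" then show "iY x \<in> mcarrier GY" by (rule iY_in)
next
  fix x y assume "x \<in> PC" "y \<in> PC"
  show "iY (\<lambda>p. x p + y p) = madd GY (iY x) (iY y)"
    by (auto simp: Y.GM_simps iY_def resv_def fun_eq_iff)
next
  fix x r assume "x \<in> PC" "r \<in> PC"
  then show "iY (path_alg_mult t x r) = mact GY (iY x) r" by (rule iY_act)
qed

lemma snd_evalY: "snd (eval_path XY p z) = eval_path X p (snd z)"
  unfolding eval_path_def
proof (induction "snd p" arbitrary: p z)
  case Nil then show ?case by (metis foldl_Nil)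
next
  case (Cons a as)
  have "snd (foldl (\<lambda>y a. XY a y) (XY a z) as) = foldl (\<lambda>y a. X a y) (snd (XY a z)) as"
    using Cons.hyps(1)[of "(fst p, as)" "XY a z"] by simp
  then show ?case using Cons.hyps(2)[symmetric] by (simp add: XY_def)
qed

lemma sndY_hom: "mod_hom PR GY GM (\<lambda>y v. snd (y v))"
  unfolding mod_hom_def PR_simps
proof (intro conjI ballI)
  fix y assume y: "y \<in> mcarrier GY"
  have "{v. snd (y v) \<noteq> 0} \<subseteq> {v. y v \<noteq> 0}" by auto
  then show "(\<lambda>v. snd (y v)) \<in> mcarrier GM"
    using y by (auto simp: Y.GM_carrier GM_carrier VY_def intro: finite_subset)
next
  fix x y assume "x \<in> mcarrier GY" "y \<in> mcarrier GY"
  show "(\<lambda>v. snd (madd GY x y v)) = madd GM (\<lambda>v. snd (x v)) (\<lambda>v. snd (y v))"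
    by (simp add: Y.GM_simps GM_simps)
next
  fix y r assume "y \<in> mcarrier GY" "r \<in> PC"
  show "(\<lambda>v. snd (mact GY y r v)) = mact GM (\<lambda>v. snd (y v)) r"
    unfolding Y.G_act_def' G_act_def' snd_sum
    by (auto simp: scY_def snd_evalY intro!: sum.cong)
qed

lemma GY_tgt: "y \<in> mcarrier GY \<Longrightarrow> fst (y v) q \<noteq> 0 \<Longrightarrow> path_tgt t q = v"
proof -
  assume y: "y \<in> mcarrier GY" and ne: "fst (y v) q \<noteq> 0"
  show ?thesis
  proof (cases "v \<in> Q0")
    case True
    then have "y v \<in> VY v" using y by (simp add: Y.GM_carrier)
    then show ?thesis using ne unfolding VY_def by blast
  next
    case False
    then have "y v = 0" using y by (simp add: Y.GM_carrier)
    then show ?thesis using ne by simp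
  qed
qed

lemma Th_inj: "inj_on Th (mcarrier GY)"
proof (rule inj_onI)
  fix y y' assume y: "y \<in> mcarrier GY" and y': "y' \<in> mcarrier GY" and eq: "Th y = Th y'"
  show "y = y'"
  proof (rule ext, rule prod_eqI)
    fix v
    have s: "snd (Th y) = snd (Th y')" using eq by simp
    then show "snd (y v) = snd (y' v)" unfolding Th_def by (metis snd_conv)
    have f: "fst (Th y) = fst (Th y')" using eq by simp
    show "fst (y v) = fst (y' v)"
    proof (rule ext)
      fix q
      show "fst (y v) q = fst (y' v) q"
      proof (cases "path_tgt t q = v")
        case True
        then show ?thesis using fun_cong[OF f, of q] unfolding Th_def by simp
      next
        case False
        then have "fst (y v) q = 0" "fst (y' v) q = 0" using GY_tgt[OF y, of v q] GY_tgt[OF y', of v q] by blast+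
        then show ?thesis by simp
      qed
    qed
  qed
qed

lemma Th_iY: "n \<in> PC \<Longrightarrow> Th (iY n) = (n, \<lambda>v. 0)"
  unfolding Th_def iY_def resv_def by simp

end


declare split_paired_All[simp del] split_paired_Ex[simp del]

context cocyc begin

lemma dY_in: "v \<in> Q0 \<Longrightarrow> x \<in> V v \<Longrightarrow> dY v ((\<lambda>_. 0), x) \<in> mcarrier GY"
proof -
  assume v: "v \<in> Q0" and x: "x \<in> V v"
  have "{w. dY v ((\<lambda>_. 0), x) w \<noteq> 0} \<subseteq> {v}" by (auto simp: dY_def)
  then have "finite {w. dY v ((\<lambda>_. 0), x) w \<noteq> 0}" by (rule finite_subset) simp
  then show ?thesis using v x zero_PC V0 by (auto simp: Y.GM_carrier dY_def VY_def zero_prod_def zero_fun_def)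
qed

lemma lemmaA:
  assumes hyp: "Ext1_vanishes PR GM RM"
  shows "\<exists>f. (\<forall>v\<in>Q0. \<forall>x\<in>V v. f v x \<in> PC \<and> (\<forall>q. f v x q \<noteq> 0 \<longrightarrow> path_tgt t q = v)) \<and>
     (\<forall>v\<in>Q0. \<forall>x\<in>V v. \<forall>y\<in>V v. f v (x + y) = (\<lambda>q. f v x q + f v y q)) \<and>
     (\<forall>v\<in>Q0. \<forall>x\<in>V v. \<forall>c. f v (scale c x) = (\<lambda>q. c * f v x q)) \<and>
     (\<forall>a\<in>Q1. \<forall>x\<in>V (s a). g a x = (\<lambda>q. path_alg_mult t (f (s a) x) (sc 1 (s a, [a])) q - f (t a) (X a x) q))"
proof -
  define E where "E = transp Th GY"
  define i' where "i' = Th \<circ> iY"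
  have inj: "inj_on Th (mcarrier GY)" by (rule Th_inj)
  have c1: "rmodule PR E" unfolding E_def by (rule transp_rmodule[OF Y.GM_rmodule inj])
  have c2: "mod_hom PR RM E i'" unfolding E_def i'_def by (rule transp_hom_into[OF iY_hom inj])
  have c3: "mod_hom PR E GM snd" unfolding E_def
    by (rule transp_hom_from[OF sndY_hom inj _ Y.GM_rmodule]) (simp add: Th_def)
  have c4: "inj_on i' (mcarrier RM)"
    by (rule inj_onI) (simp add: i'_def Th_iY RM_simps)
  have c5: "snd ` mcarrier E = mcarrier GM"
  proof
    show "snd ` mcarrier E \<subseteq> mcarrier GM" using c3 unfolding mod_hom_def by auto
  next
    show "mcarrier GM \<subseteq> snd ` mcarrier E"
    proof
      fix m assume m: "m \<in> mcarrier GM"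
      define y where "y = (\<lambda>v. ((\<lambda>_::'v \<times> 'a list. 0::'k), m v))"
      have "{v. y v \<noteq> 0} \<subseteq> {v. m v \<noteq> 0}" by (auto simp: y_def zero_prod_def zero_fun_def)
      then have "finite {v. y v \<noteq> 0}" using m finite_subset by (auto simp: GM_carrier)
      then have y: "y \<in> mcarrier GY" using m zero_PC
        by (auto simp: Y.GM_carrier GM_carrier y_def VY_def zero_prod_def zero_fun_def)
      have "snd (Th y) = m" by (simp add: Th_def y_def)
      then show "m \<in> snd ` mcarrier E" using y unfolding E_def transp_simps by force
    qed
  qed
  have c6: "{x \<in> mcarrier E. snd x = mzero GM} = i' ` mcarrier RM"
  proof
    show "{x \<in> mcarrier E. snd x = mzero GM} \<subseteq> i' ` mcarrier RM"
    proof
      fix x assume "x \<in> {x \<in> mcarrier E. snd x = mzero GM}"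
      then obtain y where y: "y \<in> mcarrier GY" and xy: "x = Th y" and sx: "snd x = (\<lambda>v. 0)"
        unfolding E_def transp_simps GM_simps by auto
      define n where "n = fst x"
      have n_def': "n q = fst (y (path_tgt t q)) q" for q unfolding n_def xy Th_def by simp
      have sy: "snd (y v) = 0" for v using sx unfolding xy Th_def by (metis snd_conv)
      have yQ0: "y v \<noteq> 0 \<Longrightarrow> v \<in> Q0" for v using y by (auto simp: Y.GM_carrier)
      have fyPC: "y v \<noteq> 0 \<Longrightarrow> fst (y v) \<in> PC" for v using y yQ0[of v] by (auto simp: Y.GM_carrier VY_def)
      have "{q. n q \<noteq> 0} \<subseteq> (\<Union>v\<in>{v. y v \<noteq> 0}. {q. fst (y v) q \<noteq> 0})"
      proof
        fix q assume "q \<in> {q. n q \<noteq> 0}"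
        then have "fst (y (path_tgt t q)) q \<noteq> 0" by (simp add: n_def')
        moreover then have "y (path_tgt t q) \<noteq> 0" by auto
        ultimately show "q \<in> (\<Union>v\<in>{v. y v \<noteq> 0}. {q. fst (y v) q \<noteq> 0})" by blast
      qed
      moreover have "finite (\<Union>v\<in>{v. y v \<noteq> 0}. {q. fst (y v) q \<noteq> 0})"
        using y fyPC PC_fin by (auto simp: Y.GM_carrier)
      ultimately have fin: "finite {q. n q \<noteq> 0}" by (rule finite_subset)
      have pth: "n q \<noteq> 0 \<Longrightarrow> is_path Q0 Q1 s t q" for q
      proof -
        assume "n q \<noteq> 0"
        then have ne: "fst (y (path_tgt t q)) q \<noteq> 0" by (simp add: n_def')
        then have "y (path_tgt t q) \<noteq> 0" by auto
        then show ?thesis using fyPC PC_path ne by blast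
      qed
      have nPC: "n \<in> PC" using fin pth by (simp add: PC_iff)
      have "y = iY n"
      proof (rule ext, rule prod_eqI)
        fix v
        show "snd (y v) = snd (iY n v)" using sy by (simp add: iY_def)
        show "fst (y v) = fst (iY n v)"
        proof (rule ext)
          fix q
          show "fst (y v) q = fst (iY n v) q"
            using GY_tgt[OF y, of v q] by (auto simp: iY_def resv_def n_def')
        qed
      qed
      then have "x = i' n" unfolding xy i'_def by simp
      then show "x \<in> i' ` mcarrier RM" using nPC by (simp add: RM_simps)
    qed
  next
    show "i' ` mcarrier RM \<subseteq> {x \<in> mcarrier E. snd x = mzero GM}"
    proof
      fix z assume "z \<in> i' ` mcarrier RM"
      then obtain n where n: "n \<in> PC" and z: "z = Th (iY n)" unfolding i'_def RM_simps by auto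
      have "z \<in> mcarrier E" unfolding E_def transp_simps z using iY_in[OF n] by blast
      moreover have "snd z = mzero GM" using Th_iY[OF n] z by (simp add: GM_simps)
      ultimately show "z \<in> {x \<in> mcarrier E. snd x = mzero GM}" by simp
    qed
  qed
  obtain q' where hq: "mod_hom PR E RM q'" and qi: "\<forall>x\<in>mcarrier RM. q' (i' x) = x"
    using hyp unfolding Ext1_vanishes_def using c1 c2 c3 c4 c5 c6 by blast
  define F where "F = q' \<circ> Th"
  have hF: "mod_hom PR GY RM F" unfolding F_def using transp_hom_back[OF hq[unfolded E_def] inj] .
  have Fin: "y \<in> mcarrier GY \<Longrightarrow> F y \<in> PC" for y using hF unfolding mod_hom_def RM_simps by blast
  have Fadd: "y \<in> mcarrier GY \<Longrightarrow> y' \<in> mcarrier GY \<Longrightarrow> F (madd GY y y') = (\<lambda>p. F y p + F y' p)" for y y'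
    using hF unfolding mod_hom_def RM_simps by blast
  have Fact: "y \<in> mcarrier GY \<Longrightarrow> r \<in> PC \<Longrightarrow> F (mact GY y r) = path_alg_mult t (F y) r" for y r
    using hF unfolding mod_hom_def RM_simps PR_simps by blast
  have Fi: "n \<in> PC \<Longrightarrow> F (iY n) = n" for n using qi unfolding F_def i'_def RM_simps by simp
  define f where "f v x = F (dY v ((\<lambda>_. 0), x))" for v x
  have fPC: "v \<in> Q0 \<Longrightarrow> x \<in> V v \<Longrightarrow> f v x \<in> PC" for v x unfolding f_def using Fin dY_in by blast
  have fadd: "f v (x + y) = (\<lambda>q. f v x q + f v y q)" if "v \<in> Q0" "x \<in> V v" "y \<in> V v" for v x y
  proof -
    have "dY v ((\<lambda>_. 0), x + y) = madd GY (dY v ((\<lambda>_. 0), x)) (dY v ((\<lambda>_. 0), y))"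
      by (auto simp: Y.GM_simps dY_def fun_eq_iff)
    then show ?thesis unfolding f_def using Fadd dY_in that by simp
  qed
  have fsc0: "f v (scale c x) = (\<lambda>q. if path_tgt t q = v then f v x q * c else 0)" if "v \<in> Q0" "x \<in> V v" for v x c
  proof -
    have "mact GY (dY v ((\<lambda>_. 0), x)) (sc c (v, [])) = dY v ((\<lambda>_. 0), scale c x)"
      by (auto simp: Y.G_act_sc dY_def scY_def fun_eq_iff)
    moreover have "F (mact GY (dY v ((\<lambda>_. 0), x)) (sc c (v, []))) = path_alg_mult t (F (dY v ((\<lambda>_. 0), x))) (sc c (v, []))"
      using Fact[OF dY_in[OF that] sc_PC] that by (simp add: is_path_Nil)
    ultimately have "f v (scale c x) = path_alg_mult t (f v x) (sc c (v, []))"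
      unfolding f_def by simp
    then show ?thesis using mult_e[OF PC_fin[OF fPC[OF that]]] by simp
  qed
  have ftgt: "f v x q \<noteq> 0 \<Longrightarrow> path_tgt t q = v" if "v \<in> Q0" "x \<in> V v" for v x q
    using fsc0[OF that, of 1] by (metis vs.scale_one)
  have fsc: "f v (scale c x) = (\<lambda>q. c * f v x q)" if "v \<in> Q0" "x \<in> V v" for v x c
    unfolding fsc0[OF that] using ftgt[OF that] by (auto simp: fun_eq_iff mult.commute)
  have fcoc: "g a x = (\<lambda>q. path_alg_mult t (f (s a) x) (sc 1 (s a, [a])) q - f (t a) (X a x) q)"
    if a: "a \<in> Q1" and x: "x \<in> V (s a)" for a x
  proof -
    have Xx: "X a x \<in> V (t a)" using X_in[OF a x] .
    have gt: "g a x q \<noteq> 0 \<Longrightarrow> path_tgt t q = t a" for q using g_tgt[OF a x] by blast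
    have ev: "eval_path XY (s a, [a]) z = XY a z" for z by (simp add: eval_path_def)
    have "mact GY (dY (s a) ((\<lambda>_. 0), x)) (sc 1 (s a, [a])) = madd GY (iY (g a x)) (dY (t a) ((\<lambda>_. 0), X a x))"
    proof (rule ext)
      fix w
      have r1: "resv t (t a) (g a x) = g a x" using gt by (auto simp: resv_def fun_eq_iff)
      have r2: "w \<noteq> t a \<Longrightarrow> resv t w (g a x) = (\<lambda>_. 0)" using gt by (auto simp: resv_def fun_eq_iff)
      show "mact GY (dY (s a) ((\<lambda>_. 0), x)) (sc 1 (s a, [a])) w = madd GY (iY (g a x)) (dY (t a) ((\<lambda>_. 0), X a x)) w"
        unfolding Y.G_act_sc Y.GM_simps ev
        using r1 r2 by (auto simp: dY_def path_tgt_def XY_def mult_zeroL scY_def iY_def zero_prod_def zero_fun_def)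
    qed
    note eq1 = this
    have "path_alg_mult t (f (s a) x) (sc 1 (s a, [a])) = F (mact GY (dY (s a) ((\<lambda>_. 0), x)) (sc 1 (s a, [a])))"
      unfolding f_def using Fact[OF dY_in[OF sQ0[OF a] x] sc_PC[OF arrow_path[OF a]]] by simp
    also have "\<dots> = F (madd GY (iY (g a x)) (dY (t a) ((\<lambda>_. 0), X a x)))" using eq1 by simp
    also have "\<dots> = (\<lambda>p. g a x p + f (t a) (X a x) p)"
      unfolding f_def using Fadd[OF iY_in[OF g_in[OF a x]] dY_in[OF tQ0[OF a] Xx]] Fi[OF g_in[OF a x]] by simp
    finally have "path_alg_mult t (f (s a) x) (sc 1 (s a, [a])) = (\<lambda>p. g a x p + f (t a) (X a x) p)" .
    then show ?thesis by (auto simp: fun_eq_iff)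
  qed
  show ?thesis
    by (rule exI[of _ f]) (use fPC ftgt fadd fsc fcoc in blast)
qed

end


declare split_paired_All[simp del] split_paired_Ex[simp del]

definition cocdata :: "'v set \<Rightarrow> 'a set \<Rightarrow> ('a \<Rightarrow> 'v) \<Rightarrow> ('a \<Rightarrow> 'v) \<Rightarrow> ('k::field \<Rightarrow> 'x::ab_group_add \<Rightarrow> 'x)
   \<Rightarrow> ('v \<Rightarrow> 'x set) \<Rightarrow> ('a \<Rightarrow> 'x \<Rightarrow> ('v \<times> 'a list \<Rightarrow> 'k)) \<Rightarrow> bool" where
  "cocdata Q0 Q1 s t scale V g \<longleftrightarrow> (\<forall>a\<in>Q1. \<forall>x\<in>V (s a). g a x \<in> path_alg_carrier Q0 Q1 s t \<and>
     (\<forall>q. g a x q \<noteq> 0 \<longrightarrow> path_tgt t q = t a) \<and>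
     (\<forall>y\<in>V (s a). g a (x + y) = (\<lambda>q. g a x q + g a y q)) \<and>
     (\<forall>c. g a (scale c x) = (\<lambda>q. c * g a x q)))"

definition cobound :: "'v set \<Rightarrow> 'a set \<Rightarrow> ('a \<Rightarrow> 'v) \<Rightarrow> ('a \<Rightarrow> 'v) \<Rightarrow> ('k::field \<Rightarrow> 'x::ab_group_add \<Rightarrow> 'x)
   \<Rightarrow> ('v \<Rightarrow> 'x set) \<Rightarrow> ('a \<Rightarrow> 'x \<Rightarrow> 'x) \<Rightarrow> ('a \<Rightarrow> 'x \<Rightarrow> ('v \<times> 'a list \<Rightarrow> 'k))
   \<Rightarrow> ('v \<Rightarrow> 'x \<Rightarrow> ('v \<times> 'a list \<Rightarrow> 'k)) \<Rightarrow> bool" where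
  "cobound Q0 Q1 s t scale V X g f \<longleftrightarrow>
     (\<forall>v\<in>Q0. \<forall>x\<in>V v. f v x \<in> path_alg_carrier Q0 Q1 s t \<and> (\<forall>q. f v x q \<noteq> 0 \<longrightarrow> path_tgt t q = v)) \<and>
     (\<forall>v\<in>Q0. \<forall>x\<in>V v. \<forall>y\<in>V v. f v (x + y) = (\<lambda>q. f v x q + f v y q)) \<and>
     (\<forall>v\<in>Q0. \<forall>x\<in>V v. \<forall>c. f v (scale c x) = (\<lambda>q. c * f v x q)) \<and>
     (\<forall>a\<in>Q1. \<forall>x\<in>V (s a). g a x = (\<lambda>q. path_alg_mult t (f (s a) x) (sc 1 (s a, [a])) q - f (t a) (X a x) q))"

context qrep begin

lemma lemmaA':
  assumes hyp: "Ext1_vanishes PR GM (regular_module Q0 Q1 s t)"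
  shows "\<forall>g. cocdata Q0 Q1 s t scale V g \<longrightarrow> (\<exists>f. cobound Q0 Q1 s t scale V X g f)"
proof (intro allI impI)
  fix g assume cd: "cocdata Q0 Q1 s t scale V g"
  interpret C: cocyc Q0 Q1 s t scale V X g
    by unfold_locales (use cd quiv rep in \<open>auto simp: cocdata_def\<close>)
  show "\<exists>f. cobound Q0 Q1 s t scale V X g f"
    using C.lemmaA[OF hyp] unfolding cobound_def by blast
qed

end

lemma closed_facts:
  assumes q: "quiver Q0 Q1 s t" and c: "closed_subquiver Q0 Q1 s t P0 P1"
  shows "P0 \<subseteq> Q0" "P1 = {a \<in> Q1. s a \<in> P0}" "\<And>a. a \<in> Q1 \<Longrightarrow> s a \<in> P0 \<Longrightarrow> t a \<in> P0"
proof -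
  obtain S where S: "S \<subseteq> Q0" "P0 = closure_verts Q0 Q1 s t S" "P1 = closure_arrows Q0 Q1 s t S"
    using c unfolding closed_subquiver_def by blast
  show "P0 \<subseteq> Q0" unfolding S(2) closure_verts_def using is_path_tgt[OF q] by blast
  show "P1 = {a \<in> Q1. s a \<in> P0}" unfolding S(3) S(2) closure_arrows_def by simp
  fix a assume a: "a \<in> Q1" "s a \<in> P0"
  then obtain v as where v: "v \<in> S" "is_path Q0 Q1 s t (v, as)" "path_tgt t (v, as) = s a"
    unfolding S(2) closure_verts_def by blast
  have ap: "is_path Q0 Q1 s t (s a, [a])" using a q by (simp add: is_path_Cons is_path_Nil quiver_def)
  have "is_path Q0 Q1 s t (v, as @ [a])" by (rule is_path_append[OF q v(2) ap v(3)])
  moreover have "path_tgt t (v, as @ [a]) = t a" using tgt_append[of t "(v, as)" "(s a, [a])"] v(3)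
    by (simp add: path_tgt_def)
  ultimately show "t a \<in> P0" unfolding S(2) closure_verts_def using v(1) by blast
qed

lemma closed_quiver:
  assumes q: "quiver Q0 Q1 s t" and c: "closed_subquiver Q0 Q1 s t P0 P1"
  shows "quiver P0 P1 s t"
  using closed_facts[OF q c] unfolding quiver_def by auto

lemma closed_rep:
  assumes q: "quiver Q0 Q1 s t" and c: "closed_subquiver Q0 Q1 s t P0 P1"
    and r: "representation Q0 Q1 s t scale V X"
  shows "representation P0 P1 s t scale V X"
  using closed_facts[OF q c] r unfolding representation_def by auto

lemma path_PQ: "P0 \<subseteq> Q0 \<Longrightarrow> P1 \<subseteq> Q1 \<Longrightarrow> is_path P0 P1 s t p \<Longrightarrow> is_path Q0 Q1 s t p"
  unfolding is_path_def by auto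

lemma path_QP:
  assumes q: "quiver Q0 Q1 s t" and c: "closed_subquiver Q0 Q1 s t P0 P1"
  shows "is_path Q0 Q1 s t (v, as) \<Longrightarrow> v \<in> P0 \<Longrightarrow> is_path P0 P1 s t (v, as)"
proof (induction as arbitrary: v)
  case Nil then show ?case by (simp add: is_path_Nil)
next
  case (Cons a as)
  note F = closed_facts[OF q c]
  have qp: "quiver P0 P1 s t" by (rule closed_quiver[OF q c])
  from Cons.prems have a: "a \<in> Q1" "s a = v" "is_path Q0 Q1 s t (t a, as)" by (auto simp: is_path_Cons[OF q])
  have "a \<in> P1" "t a \<in> P0" using a Cons.prems(2) F by auto
  then show ?case using Cons.IH[OF a(3)] a Cons.prems(2) by (simp add: is_path_Cons[OF qp])
qed

lemma pi_mult:
  assumes "finite {q. h q \<noteq> 0}" "finite {q. k q \<noteq> 0}"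
  shows "(\<lambda>q. if fst q \<in> P0 then path_alg_mult t h k q else 0) = path_alg_mult t (\<lambda>q. if fst q \<in> P0 then h q else 0) k"
proof (rule ext)
  fix q
  have s: "{q. (if fst q \<in> P0 then h q else 0) \<noteq> 0} \<subseteq> {q. h q \<noteq> 0}" by auto
  show "(if fst q \<in> P0 then path_alg_mult t h k q else 0) = path_alg_mult t (\<lambda>q. if fst q \<in> P0 then h q else 0) k q"
    unfolding mult_superset[OF assms order_refl order_refl] mult_superset[OF assms s order_refl]
    by (auto simp: concat_Some intro!: sum.cong sum.neutral)
qed

lemma projection:
  fixes Q0 P0 :: "'v set" and Q1 P1 :: "'a set" and s t :: "'a \<Rightarrow> 'v"
    and scale :: "'k::field \<Rightarrow> 'x::ab_group_add \<Rightarrow> 'x" and V :: "'v \<Rightarrow> 'x set" and X :: "'a \<Rightarrow> 'x \<Rightarrow> 'x"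
  assumes q: "quiver Q0 Q1 s t" and r: "representation Q0 Q1 s t scale V X"
    and c: "closed_subquiver Q0 Q1 s t P0 P1"
    and solvQ: "\<forall>g. cocdata Q0 Q1 s t scale V g \<longrightarrow> (\<exists>f. cobound Q0 Q1 s t scale V X g f)"
  shows "\<forall>g. cocdata P0 P1 s t scale V g \<longrightarrow> (\<exists>f. cobound P0 P1 s t scale V X g f)"
proof (intro allI impI)
  fix g :: "'a \<Rightarrow> 'x \<Rightarrow> ('v \<times> 'a list \<Rightarrow> 'k)"
  assume cP: "cocdata P0 P1 s t scale V g"
  note F = closed_facts[OF q c]
  have PQ: "\<And>p. is_path P0 P1 s t p \<Longrightarrow> is_path Q0 Q1 s t p" using path_PQ[of P0 Q0 P1 Q1] F by auto
  have carPQ: "h \<in> path_alg_carrier P0 P1 s t \<Longrightarrow> h \<in> path_alg_carrier Q0 Q1 s t" for h :: "'v \<times> 'a list \<Rightarrow> 'k"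
    using PQ unfolding path_alg_carrier_def by auto
  define g' where "g' a x = (if a \<in> P1 then g a x else (\<lambda>_. 0))" for a x
  have "cocdata Q0 Q1 s t scale V g'"
    unfolding cocdata_def
  proof (intro ballI)
    fix a x assume a: "a \<in> Q1" and x: "x \<in> V (s a)"
    show "g' a x \<in> path_alg_carrier Q0 Q1 s t \<and> (\<forall>q. g' a x q \<noteq> 0 \<longrightarrow> path_tgt t q = t a) \<and>
      (\<forall>y\<in>V (s a). g' a (x + y) = (\<lambda>q. g' a x q + g' a y q)) \<and> (\<forall>c. g' a (scale c x) = (\<lambda>q. c * g' a x q))"
    proof (cases "a \<in> P1")
      case True
      then have "g a x \<in> path_alg_carrier P0 P1 s t \<and> (\<forall>q. g a x q \<noteq> 0 \<longrightarrow> path_tgt t q = t a) \<and>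
        (\<forall>y\<in>V (s a). g a (x + y) = (\<lambda>q. g a x q + g a y q)) \<and> (\<forall>c. g a (scale c x) = (\<lambda>q. c * g a x q))"
        using cP x unfolding cocdata_def by blast
      then show ?thesis using True carPQ by (simp add: g'_def)
    next
      case False
      then show ?thesis by (simp add: g'_def path_alg_carrier_def)
    qed
  qed
  then obtain f where f: "cobound Q0 Q1 s t scale V X g' f" using solvQ by blast
  define pi :: "('v \<times> 'a list \<Rightarrow> 'k) \<Rightarrow> ('v \<times> 'a list \<Rightarrow> 'k)" where "pi h = (\<lambda>q. if fst q \<in> P0 then h q else 0)" for h
  define f' where "f' v x = pi (f v x)" for v x
  have fQ: "\<And>v x. v \<in> Q0 \<Longrightarrow> x \<in> V v \<Longrightarrow> f v x \<in> path_alg_carrier Q0 Q1 s t \<and> (\<forall>q. f v x q \<noteq> 0 \<longrightarrow> path_tgt t q = v)"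
    using f unfolding cobound_def by blast
  have 1: "\<forall>v\<in>P0. \<forall>x\<in>V v. f' v x \<in> path_alg_carrier P0 P1 s t \<and> (\<forall>q. f' v x q \<noteq> 0 \<longrightarrow> path_tgt t q = v)"
  proof (intro ballI conjI allI impI)
    fix v x assume v: "v \<in> P0" and x: "x \<in> V v"
    have fv: "f v x \<in> path_alg_carrier Q0 Q1 s t" "\<forall>q. f v x q \<noteq> 0 \<longrightarrow> path_tgt t q = v"
      using fQ[of v x] v x F(1) by auto
    have "{q. f' v x q \<noteq> 0} \<subseteq> {q. f v x q \<noteq> 0}" by (auto simp: f'_def pi_def)
    moreover have "finite {q. f v x q \<noteq> 0}" using fv(1) by (simp add: path_alg_carrier_def)
    ultimately have fin: "finite {q. f' v x q \<noteq> 0}" by (rule finite_subset)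
    have "is_path P0 P1 s t q" if "f' v x q \<noteq> 0" for q
    proof -
      have "f v x q \<noteq> 0" "fst q \<in> P0" using that by (auto simp: f'_def pi_def split: if_splits)
      then show ?thesis using fv(1) path_QP[OF q c, of "fst q" "snd q"] by (simp add: path_alg_carrier_def)
    qed
    then show "f' v x \<in> path_alg_carrier P0 P1 s t" using fin by (simp add: path_alg_carrier_def)
    fix q assume "f' v x q \<noteq> 0"
    then show "path_tgt t q = v" using fv(2) by (auto simp: f'_def pi_def split: if_splits)
  qed
  have 2: "\<forall>v\<in>P0. \<forall>x\<in>V v. \<forall>y\<in>V v. f' v (x + y) = (\<lambda>q. f' v x q + f' v y q)"
    using f F(1) unfolding cobound_def f'_def pi_def by (auto simp: fun_eq_iff)
  have 3: "\<forall>v\<in>P0. \<forall>x\<in>V v. \<forall>c. f' v (scale c x) = (\<lambda>q. c * f' v x q)"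
    using f F(1) unfolding cobound_def f'_def pi_def by (auto simp: fun_eq_iff)
  have 4: "g a x = (\<lambda>q. path_alg_mult t (f' (s a) x) (sc 1 (s a, [a])) q - f' (t a) (X a x) q)"
    if a: "a \<in> P1" and x: "x \<in> V (s a)" for a x
  proof -
    have aQ: "a \<in> Q1" "s a \<in> P0" "t a \<in> P0" using a F by auto
    have "g' a x = (\<lambda>q. path_alg_mult t (f (s a) x) (sc 1 (s a, [a])) q - f (t a) (X a x) q)"
      using f aQ x unfolding cobound_def by blast
    then have e: "g a x = (\<lambda>q. path_alg_mult t (f (s a) x) (sc 1 (s a, [a])) q - f (t a) (X a x) q)"
      using a by (simp add: g'_def)
    have gP: "g a x \<in> path_alg_carrier P0 P1 s t" using cP a x unfolding cocdata_def by blast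
    have "g a x = pi (g a x)"
      using gP unfolding pi_def path_alg_carrier_def is_path_def by (auto simp: fun_eq_iff)
    also have "\<dots> = (\<lambda>q. pi (path_alg_mult t (f (s a) x) (sc 1 (s a, [a]))) q - pi (f (t a) (X a x)) q)"
      unfolding e pi_def by (auto simp: fun_eq_iff)
    also have "pi (path_alg_mult t (f (s a) x) (sc 1 (s a, [a]))) = path_alg_mult t (f' (s a) x) (sc 1 (s a, [a]))"
      unfolding pi_def f'_def
      by (rule pi_mult) (use fQ[of "s a" x] aQ x F(1) in \<open>auto simp: path_alg_carrier_def supp_sc\<close>)
    finally show ?thesis by (simp add: f'_def)
  qed
  show "\<exists>f. cobound P0 P1 s t scale V X g f"
    by (rule exI[of _ f']) (use 1 2 3 4 in \<open>simp add: cobound_def\<close>)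
qed


declare split_paired_All[simp del] split_paired_Ex[simp del]

locale extn = qrep Q0 Q1 s t scale V X
  for Q0 :: "'v set" and Q1 :: "'a set" and s t :: "'a \<Rightarrow> 'v"
    and scale :: "'k::field \<Rightarrow> 'x::ab_group_add \<Rightarrow> 'x"
    and V :: "'v \<Rightarrow> 'x set" and X :: "'a \<Rightarrow> 'x \<Rightarrow> 'x" +
  fixes E :: "('e, 'v \<times> 'a list \<Rightarrow> 'k) rmod" and i :: "('v \<times> 'a list \<Rightarrow> 'k) \<Rightarrow> 'e" and p :: "'e \<Rightarrow> 'v \<Rightarrow> 'x"
  assumes E_mod: "rmodule PR E"
    and i_hom: "mod_hom PR (regular_module Q0 Q1 s t) E i"
    and p_hom: "mod_hom PR E GM p"
    and i_inj: "inj_on i PC"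
    and p_surj: "p ` mcarrier E = mcarrier GM"
    and ker: "{x \<in> mcarrier E. p x = mzero GM} = i ` PC"
    and solv: "\<forall>g. cocdata Q0 Q1 s t scale V g \<longrightarrow> (\<exists>f. cobound Q0 Q1 s t scale V X g f)"
begin

definition EM :: "'e monoid" where "EM = \<lparr>carrier = mcarrier E, mult = madd E, one = mzero E\<rparr>"

lemma EM_simps[simp]: "carrier EM = mcarrier E" "mult EM = madd E" "one EM = mzero E"
  unfolding EM_def by simp_all

lemma Eax:
  "mzero E \<in> mcarrier E"
  "\<And>x y. x \<in> mcarrier E \<Longrightarrow> y \<in> mcarrier E \<Longrightarrow> madd E x y \<in> mcarrier E"
  "\<And>x y z. x \<in> mcarrier E \<Longrightarrow> y \<in> mcarrier E \<Longrightarrow> z \<in> mcarrier E \<Longrightarrow> madd E (madd E x y) z = madd E x (madd E y z)"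
  "\<And>x y. x \<in> mcarrier E \<Longrightarrow> y \<in> mcarrier E \<Longrightarrow> madd E x y = madd E y x"
  "\<And>x. x \<in> mcarrier E \<Longrightarrow> madd E (mzero E) x = x"
  "\<And>x. x \<in> mcarrier E \<Longrightarrow> \<exists>y\<in>mcarrier E. madd E x y = mzero E"
  "\<And>x r. x \<in> mcarrier E \<Longrightarrow> r \<in> PC \<Longrightarrow> mact E x r \<in> mcarrier E"
  "\<And>x y r. x \<in> mcarrier E \<Longrightarrow> y \<in> mcarrier E \<Longrightarrow> r \<in> PC \<Longrightarrow> mact E (madd E x y) r = madd E (mact E x r) (mact E y r)"
  "\<And>x r r'. x \<in> mcarrier E \<Longrightarrow> r \<in> PC \<Longrightarrow> r' \<in> PC \<Longrightarrow> mact E x (\<lambda>q. r q + r' q) = madd E (mact E x r) (mact E x r')"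
  "\<And>x r r'. x \<in> mcarrier E \<Longrightarrow> r \<in> PC \<Longrightarrow> r' \<in> PC \<Longrightarrow> mact E (mact E x r) r' = mact E x (path_alg_mult t r r')"
  using E_mod unfolding rmodule_def PR_simps by auto

lemma EM_group: "comm_group EM"
proof (rule comm_groupI)
  fix x assume x: "x \<in> carrier EM"
  then obtain y where "y \<in> mcarrier E" "madd E x y = mzero E" using Eax(6) by auto
  then show "\<exists>y\<in>carrier EM. y \<otimes>\<^bsub>EM\<^esub> x = \<one>\<^bsub>EM\<^esub>" using x Eax(4)[of y x] by auto
qed (use Eax in auto)

sublocale EG: comm_group EM by (rule EM_group)

abbreviation "einv \<equiv> m_inv EM"

lemma einv_closed: "x \<in> mcarrier E \<Longrightarrow> einv x \<in> mcarrier E"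
  using EG.inv_closed by simp

lemma einv_r: "x \<in> mcarrier E \<Longrightarrow> madd E x (einv x) = mzero E"
  using EG.r_inv by simp

lemma einv_l: "x \<in> mcarrier E \<Longrightarrow> madd E (einv x) x = mzero E"
  using EG.l_inv by simp

lemma Ezero_r: "x \<in> mcarrier E \<Longrightarrow> madd E x (mzero E) = x"
  using EG.r_one by simp

lemma Eidem: "x \<in> mcarrier E \<Longrightarrow> madd E x x = x \<Longrightarrow> x = mzero E"
  using EG.r_cancel_one[of x x] by simp

lemma Elcomm: "x \<in> mcarrier E \<Longrightarrow> y \<in> mcarrier E \<Longrightarrow> z \<in> mcarrier E \<Longrightarrow> madd E x (madd E y z) = madd E y (madd E x z)"
  using EG.m_lcomm by simp

lemma einv_unique: "x \<in> mcarrier E \<Longrightarrow> y \<in> mcarrier E \<Longrightarrow> madd E x y = mzero E \<Longrightarrow> einv x = y"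
  using EG.inv_equality[of y x] Eax(4) by simp

lemma einv_add: "x \<in> mcarrier E \<Longrightarrow> y \<in> mcarrier E \<Longrightarrow> einv (madd E x y) = madd E (einv x) (einv y)"
  using EG.inv_mult by simp

lemma einv_zero: "einv (mzero E) = mzero E"
  using EG.inv_one by simp

lemma Eact_zero: "x \<in> mcarrier E \<Longrightarrow> mact E x (\<lambda>_. 0) = mzero E"
proof -
  assume x: "x \<in> mcarrier E"
  have "mact E x (\<lambda>q. (\<lambda>_. 0) q + (\<lambda>_. 0) q) = madd E (mact E x (\<lambda>_. 0)) (mact E x (\<lambda>_. 0))"
    using Eax(9)[OF x zero_PC zero_PC] .
  then have "madd E (mact E x (\<lambda>_. 0)) (mact E x (\<lambda>_. 0)) = mact E x (\<lambda>_. 0)" by simp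
  then show ?thesis by (rule Eidem[OF Eax(7)[OF x zero_PC]])
qed

lemma Ezero_act: "r \<in> PC \<Longrightarrow> mact E (mzero E) r = mzero E"
proof -
  assume r: "r \<in> PC"
  have "mact E (madd E (mzero E) (mzero E)) r = madd E (mact E (mzero E) r) (mact E (mzero E) r)"
    using Eax(8)[OF Eax(1) Eax(1) r] .
  then have "madd E (mact E (mzero E) r) (mact E (mzero E) r) = mact E (mzero E) r"
    unfolding Eax(5)[OF Eax(1)] by (rule sym)
  then show ?thesis by (rule Eidem[OF Eax(7)[OF Eax(1) r]])
qed

lemma einv_act: "x \<in> mcarrier E \<Longrightarrow> r \<in> PC \<Longrightarrow> mact E (einv x) r = einv (mact E x r)"
proof -
  assume x: "x \<in> mcarrier E" and r: "r \<in> PC"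
  have "madd E (mact E x r) (mact E (einv x) r) = mact E (madd E x (einv x)) r"
    using Eax(8)[OF x einv_closed[OF x] r] by simp
  also have "\<dots> = mzero E" using einv_r[OF x] Ezero_act[OF r] by simp
  finally show ?thesis using einv_unique Eax(7) x r einv_closed by metis
qed

lemma i_in: "n \<in> PC \<Longrightarrow> i n \<in> mcarrier E"
  using i_hom unfolding mod_hom_def RM_simps by blast

lemma i_add: "n \<in> PC \<Longrightarrow> n' \<in> PC \<Longrightarrow> i (\<lambda>q. n q + n' q) = madd E (i n) (i n')"
  using i_hom unfolding mod_hom_def RM_simps by blast

lemma i_act: "n \<in> PC \<Longrightarrow> r \<in> PC \<Longrightarrow> i (path_alg_mult t n r) = mact E (i n) r"
  using i_hom unfolding mod_hom_def RM_simps PR_simps by blast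

lemma i_zero: "i (\<lambda>_. 0) = mzero E"
proof -
  have "madd E (i (\<lambda>_. 0)) (i (\<lambda>_. 0)) = i (\<lambda>_. 0)" using i_add[OF zero_PC zero_PC] by simp
  then show ?thesis by (rule Eidem[OF i_in[OF zero_PC]])
qed

lemma neg_PC: "n \<in> PC \<Longrightarrow> (\<lambda>q. - n q) \<in> PC"
  using scale_PC[of n "-1"] by simp

lemma i_neg: "n \<in> PC \<Longrightarrow> i (\<lambda>q. - n q) = einv (i n)"
proof -
  assume n: "n \<in> PC"
  have "madd E (i n) (i (\<lambda>q. - n q)) = i (\<lambda>_. 0)" using i_add[OF n neg_PC[OF n]] by simp
  then show ?thesis using einv_unique[OF i_in[OF n] i_in[OF neg_PC[OF n]]] i_zero by simp
qed

lemma p_in: "x \<in> mcarrier E \<Longrightarrow> p x \<in> mcarrier GM"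
  using p_hom unfolding mod_hom_def by blast

lemma p_add: "x \<in> mcarrier E \<Longrightarrow> y \<in> mcarrier E \<Longrightarrow> p (madd E x y) = (\<lambda>v. p x v + p y v)"
  using p_hom unfolding mod_hom_def GM_simps by blast

lemma p_act: "x \<in> mcarrier E \<Longrightarrow> r \<in> PC \<Longrightarrow> p (mact E x r) = mact GM (p x) r"
  using p_hom unfolding mod_hom_def PR_simps by blast

lemma p_zero: "p (mzero E) = (\<lambda>v. 0)"
proof -
  have "p (mzero E) = (\<lambda>v. p (mzero E) v + p (mzero E) v)" using p_add[OF Eax(1) Eax(1)] Eax(5)[OF Eax(1)] by simp
  then show ?thesis by (metis (no_types) add_cancel_right_right)
qed

lemma p_inv: "x \<in> mcarrier E \<Longrightarrow> p (einv x) = (\<lambda>v. - p x v)"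
proof -
  assume x: "x \<in> mcarrier E"
  have "(\<lambda>v. p x v + p (einv x) v) = (\<lambda>v. 0)" using p_add[OF x einv_closed[OF x]] einv_r[OF x] p_zero by simp
  then show ?thesis by (metis (no_types) add_eq_0_iff)
qed

lemma p_i: "n \<in> PC \<Longrightarrow> p (i n) = (\<lambda>v. 0)"
  using ker i_in by (auto simp: GM_simps)

lemma kerD: "x \<in> mcarrier E \<Longrightarrow> p x = (\<lambda>v. 0) \<Longrightarrow> x \<in> i ` PC"
  using ker by (auto simp: GM_simps)

definition j :: "'e \<Rightarrow> ('v \<times> 'a list \<Rightarrow> 'k)" where "j = the_inv_into PC i"

lemma j_i: "n \<in> PC \<Longrightarrow> j (i n) = n"
  unfolding j_def using the_inv_into_f_f[OF i_inj] by blast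

lemma j_PC: "x \<in> mcarrier E \<Longrightarrow> p x = (\<lambda>v. 0) \<Longrightarrow> j x \<in> PC"
proof -
  assume "x \<in> mcarrier E" "p x = (\<lambda>v. 0)"
  then obtain n where "n \<in> PC" "x = i n" using kerD by blast
  then show ?thesis using j_i by simp
qed

lemma i_j: "x \<in> mcarrier E \<Longrightarrow> p x = (\<lambda>v. 0) \<Longrightarrow> i (j x) = x"
proof -
  assume "x \<in> mcarrier E" "p x = (\<lambda>v. 0)"
  then obtain n where "n \<in> PC" "x = i n" using kerD by blast
  then show ?thesis using j_i by simp
qed

lemma j_add: "x \<in> mcarrier E \<Longrightarrow> p x = (\<lambda>v. 0) \<Longrightarrow> y \<in> mcarrier E \<Longrightarrow> p y = (\<lambda>v. 0) \<Longrightarrow>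
   j (madd E x y) = (\<lambda>q. j x q + j y q)"
proof -
  assume x: "x \<in> mcarrier E" "p x = (\<lambda>v. 0)" and y: "y \<in> mcarrier E" "p y = (\<lambda>v. 0)"
  have "i (\<lambda>q. j x q + j y q) = madd E x y" using i_add[OF j_PC[OF x] j_PC[OF y]] i_j[OF x] i_j[OF y] by simp
  then show ?thesis using j_i[OF add_PC[OF j_PC[OF x] j_PC[OF y]]] by simp
qed

lemma j_act: "x \<in> mcarrier E \<Longrightarrow> p x = (\<lambda>v. 0) \<Longrightarrow> r \<in> PC \<Longrightarrow>
   j (mact E x r) = path_alg_mult t (j x) r"
proof -
  assume x: "x \<in> mcarrier E" "p x = (\<lambda>v. 0)" and r: "r \<in> PC"
  have "i (path_alg_mult t (j x) r) = mact E x r" using i_act[OF j_PC[OF x] r] i_j[OF x] by simp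
  then show ?thesis using j_i[OF mult_PC[OF j_PC[OF x] r]] by simp
qed

end


declare split_paired_All[simp del] split_paired_Ex[simp del]

context extn begin

lemma fp_closed: "(\<And>a. a \<in> A \<Longrightarrow> f a \<in> mcarrier E) \<Longrightarrow> finprod EM f A \<in> mcarrier E"
  using EG.finprod_closed[of f A] by (auto simp: Pi_def)

lemma fp_act: "finite A \<Longrightarrow> (\<And>a. a \<in> A \<Longrightarrow> f a \<in> mcarrier E) \<Longrightarrow> r \<in> PC \<Longrightarrow>
  mact E (finprod EM f A) r = finprod EM (\<lambda>a. mact E (f a) r) A"
proof (induction A rule: finite_induct)
  case empty then show ?case by (simp add: Ezero_act)
next
  case (insert a A)
  have fA: "f \<in> A \<rightarrow> carrier EM" using insert by auto
  have gA: "(\<lambda>a. mact E (f a) r) \<in> A \<rightarrow> carrier EM" using insert Eax(7) by auto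
  have "mact E (finprod EM f (insert a A)) r = mact E (madd E (f a) (finprod EM f A)) r"
    using insert fA by (simp add: EG.finprod_insert)
  also have "\<dots> = madd E (mact E (f a) r) (mact E (finprod EM f A) r)"
    using insert fp_closed[of A f] by (intro Eax(8)) auto
  also have "\<dots> = finprod EM (\<lambda>a. mact E (f a) r) (insert a A)"
    using insert gA Eax(7) by (simp add: EG.finprod_insert)
  finally show ?case .
qed

lemma fp_p: "finite A \<Longrightarrow> (\<And>a. a \<in> A \<Longrightarrow> f a \<in> mcarrier E) \<Longrightarrow> p (finprod EM f A) = (\<Sum>a\<in>A. p (f a))"
proof (induction A rule: finite_induct)
  case empty then show ?case by (simp add: p_zero zero_fun_def)
next
  case (insert a A)
  have fA: "f \<in> A \<rightarrow> carrier EM" using insert by auto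
  have "p (finprod EM f (insert a A)) = p (madd E (f a) (finprod EM f A))"
    using insert fA by (simp add: EG.finprod_insert)
  also have "\<dots> = p (f a) + p (finprod EM f A)"
    using insert fp_closed[of A f] by (subst p_add) (auto simp: plus_fun_def)
  finally show ?case using insert by simp
qed

lemma fp_mono: "finite B \<Longrightarrow> A \<subseteq> B \<Longrightarrow> (\<And>a. a \<in> B - A \<Longrightarrow> f a = mzero E) \<Longrightarrow> (\<And>a. a \<in> B \<Longrightarrow> f a \<in> mcarrier E) \<Longrightarrow>
  finprod EM f A = finprod EM f B"
  using EG.finprod_mono_neutral_cong_left[of B A f f] by (auto simp: Pi_def)

lemma fp_mult: "(\<And>a. a \<in> A \<Longrightarrow> f a \<in> mcarrier E) \<Longrightarrow> (\<And>a. a \<in> A \<Longrightarrow> g a \<in> mcarrier E) \<Longrightarrow>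
  finprod EM (\<lambda>a. madd E (f a) (g a)) A = madd E (finprod EM f A) (finprod EM g A)"
  using EG.finprod_multf[of f A g] by (auto simp: Pi_def)

lemma fp_cong: "(\<And>a. a \<in> A \<Longrightarrow> f a = g a) \<Longrightarrow> (\<And>a. a \<in> A \<Longrightarrow> g a \<in> mcarrier E) \<Longrightarrow>
  finprod EM f A = finprod EM g A"
  using EG.finprod_cong'[of A A g f] by (auto simp: Pi_def)

lemma fp_single: "f a \<in> mcarrier E \<Longrightarrow> finprod EM f {a} = f a"
  using EG.finprod_insert[of "{}" a f] Ezero_r by (simp add: Pi_def)

lemma fp_empty: "finprod EM f {} = mzero E"
  by simp

interpretation vsp: vector_space scale
  using rep unfolding representation_def by simp

definition bas :: "'v \<Rightarrow> 'x set" where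
  "bas v = (SOME B. B \<subseteq> V v \<and> vs.independent B \<and> V v \<subseteq> vs.span B)"

lemma bas: "v \<in> Q0 \<Longrightarrow> bas v \<subseteq> V v \<and> vs.independent (bas v) \<and> V v \<subseteq> vs.span (bas v)"
proof -
  obtain B where "B \<subseteq> V v" "vs.independent B" "V v \<subseteq> vs.span B"
    by (rule vsp.basis_exists[of "V v"]) simp
  then have "B \<subseteq> V v \<and> vs.independent B \<and> V v \<subseteq> vs.span B" by simp
  then show ?thesis unfolding bas_def by (rule someI)
qed

definition coord :: "'v \<Rightarrow> 'x \<Rightarrow> 'x \<Rightarrow> 'k" where "coord v x = vs.representation (bas v) x"

definition dv :: "'v \<Rightarrow> 'x \<Rightarrow> 'v \<Rightarrow> 'x" where "dv v x = (\<lambda>w. if w = v then x else 0)"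

lemma dv_in: "v \<in> Q0 \<Longrightarrow> x \<in> V v \<Longrightarrow> dv v x \<in> mcarrier GM"
proof -
  assume v: "v \<in> Q0" and x: "x \<in> V v"
  have "{w. dv v x w \<noteq> 0} \<subseteq> {v}" by (auto simp: dv_def)
  then have "finite {w. dv v x w \<noteq> 0}" by (rule finite_subset) simp
  then show ?thesis using v x V0 by (auto simp: GM_carrier dv_def)
qed

definition lift :: "'v \<Rightarrow> 'x \<Rightarrow> 'e" where "lift v b = (SOME e. e \<in> mcarrier E \<and> p e = dv v b)"

lemma lift: "v \<in> Q0 \<Longrightarrow> b \<in> V v \<Longrightarrow> lift v b \<in> mcarrier E \<and> p (lift v b) = dv v b"
proof -
  assume vb: "v \<in> Q0" "b \<in> V v"
  have "dv v b \<in> p ` mcarrier E" unfolding p_surj by (rule dv_in[OF vb])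
  then obtain e where "e \<in> mcarrier E" "p e = dv v b" by (metis imageE)
  then have "e \<in> mcarrier E \<and> p e = dv v b" by simp
  then show ?thesis unfolding lift_def by (rule someI)
qed

definition T :: "'v \<Rightarrow> 'k \<Rightarrow> 'x \<Rightarrow> 'e" where "T v c b = mact E (lift v b) (sc c (v, []))"

definition sig :: "'v \<Rightarrow> 'x \<Rightarrow> 'e" where
  "sig v x = finprod EM (\<lambda>b. T v (coord v x b) b) {b. coord v x b \<noteq> 0}"

lemma e_PC: "v \<in> Q0 \<Longrightarrow> sc c (v, []) \<in> PC"
  by (rule sc_PC) (simp add: is_path_Nil)

lemma T_in: "v \<in> Q0 \<Longrightarrow> b \<in> V v \<Longrightarrow> T v c b \<in> mcarrier E"
  unfolding T_def using lift Eax(7) e_PC by blast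

lemma sc0: "sc 0 q = (\<lambda>_. 0)" unfolding sc_def by auto

lemma T0: "v \<in> Q0 \<Longrightarrow> b \<in> V v \<Longrightarrow> T v 0 b = mzero E"
  unfolding T_def sc0 using lift Eact_zero by blast

lemma fin_coord: "finite {b. coord v x b \<noteq> 0}"
  unfolding coord_def by (rule vs.finite_representation)

lemma coord_V: "v \<in> Q0 \<Longrightarrow> coord v x b \<noteq> 0 \<Longrightarrow> b \<in> V v"
  unfolding coord_def using vs.representation_ne_zero bas by blast

lemma sig_in: "v \<in> Q0 \<Longrightarrow> sig v x \<in> mcarrier E"
  unfolding sig_def using T_in coord_V by (intro fp_closed) auto

lemma sig_super: "v \<in> Q0 \<Longrightarrow> finite F \<Longrightarrow> {b. coord v x b \<noteq> 0} \<subseteq> F \<Longrightarrow> F \<subseteq> V v \<Longrightarrow>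
  sig v x = finprod EM (\<lambda>b. T v (coord v x b) b) F"
  unfolding sig_def by (rule fp_mono) (auto simp: T0 intro: T_in)

lemma coord_add: "v \<in> Q0 \<Longrightarrow> x \<in> V v \<Longrightarrow> y \<in> V v \<Longrightarrow> coord v (x + y) b = coord v x b + coord v y b"
proof -
  assume v: "v \<in> Q0" and x: "x \<in> V v" and y: "y \<in> V v"
  have B: "vs.independent (bas v)" "x \<in> vs.span (bas v)" "y \<in> vs.span (bas v)" using bas[OF v] x y by auto
  show ?thesis unfolding coord_def vs.representation_add[OF B(1) B(3) B(2)] by simp
qed

lemma coord_scale: "v \<in> Q0 \<Longrightarrow> x \<in> V v \<Longrightarrow> coord v (scale c x) b = c * coord v x b"
proof -
  assume v: "v \<in> Q0" and x: "x \<in> V v"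
  have B: "vs.independent (bas v)" "x \<in> vs.span (bas v)" using bas[OF v] x by auto
  show ?thesis unfolding coord_def vs.representation_scale[OF B] by simp
qed

lemma dv_scale_act: "mact GM (dv v b) (sc c (v, [])) = dv v (scale c b)"
  by (auto simp: G_act_sc dv_def fun_eq_iff)

lemma sig_p: "v \<in> Q0 \<Longrightarrow> x \<in> V v \<Longrightarrow> p (sig v x) = dv v x"
proof -
  assume v: "v \<in> Q0" and x: "x \<in> V v"
  have "p (sig v x) = (\<Sum>b\<in>{b. coord v x b \<noteq> 0}. p (T v (coord v x b) b))"
    unfolding sig_def using fin_coord T_in coord_V v by (intro fp_p) auto
  also have "\<dots> = (\<Sum>b\<in>{b. coord v x b \<noteq> 0}. dv v (scale (coord v x b) b))"
  proof (rule sum.cong[OF refl])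
    fix b assume "b \<in> {b. coord v x b \<noteq> 0}"
    then have b: "b \<in> V v" using coord_V v by blast
    show "p (T v (coord v x b) b) = dv v (scale (coord v x b) b)"
      unfolding T_def using p_act[OF conjunct1[OF lift[OF v b]] e_PC[OF v]] lift[OF v b] dv_scale_act by simp
  qed
  also have "\<dots> = dv v (\<Sum>b\<in>{b. coord v x b \<noteq> 0}. scale (coord v x b) b)"
    by (auto simp: dv_def fun_eq_iff sum_fun_apply intro!: sum.neutral)
  also have "(\<Sum>b\<in>{b. coord v x b \<noteq> 0}. scale (coord v x b) b) = x"
    unfolding coord_def using vs.sum_nonzero_representation_eq[of "bas v" x] bas[OF v] x by auto
  finally show ?thesis .
qed

lemma sc_add: "sc (c + d) q = (\<lambda>r. sc c q r + sc d q r)"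
  unfolding sc_def by auto

lemma T_add: "v \<in> Q0 \<Longrightarrow> b \<in> V v \<Longrightarrow> T v (c + d) b = madd E (T v c b) (T v d b)"
  unfolding T_def sc_add using Eax(9) lift e_PC by blast

lemma sig_add: "v \<in> Q0 \<Longrightarrow> x \<in> V v \<Longrightarrow> y \<in> V v \<Longrightarrow> sig v (x + y) = madd E (sig v x) (sig v y)"
proof -
  assume v: "v \<in> Q0" and x: "x \<in> V v" and y: "y \<in> V v"
  define F where "F = {b. coord v x b \<noteq> 0} \<union> {b. coord v y b \<noteq> 0}"
  have fF: "finite F" using fin_coord F_def by simp
  have FV: "F \<subseteq> V v" using coord_V v F_def by auto
  have s3: "{b. coord v (x + y) b \<noteq> 0} \<subseteq> F" using coord_add[OF v x y] F_def by auto
  have "sig v (x + y) = finprod EM (\<lambda>b. T v (coord v (x + y) b) b) F"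
    by (rule sig_super[OF v fF s3 FV])
  also have "\<dots> = finprod EM (\<lambda>b. madd E (T v (coord v x b) b) (T v (coord v y b) b)) F"
    using coord_add[OF v x y] T_add[OF v] FV T_in[OF v] by (intro fp_cong) (auto intro!: Eax(2))
  also have "\<dots> = madd E (finprod EM (\<lambda>b. T v (coord v x b) b) F) (finprod EM (\<lambda>b. T v (coord v y b) b) F)"
    using FV T_in[OF v] by (intro fp_mult) auto
  also have "\<dots> = madd E (sig v x) (sig v y)"
    using sig_super[OF v fF _ FV, of x] sig_super[OF v fF _ FV, of y] F_def by auto
  finally show ?thesis .
qed

lemma T_act: "v \<in> Q0 \<Longrightarrow> b \<in> V v \<Longrightarrow> mact E (T v d b) (sc c (v, [])) = T v (c * d) b"
  unfolding T_def using Eax(10)[OF conjunct1[OF lift] e_PC e_PC] by (simp add: mult_sc_sc mult.commute)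

lemma sig_scale: "v \<in> Q0 \<Longrightarrow> x \<in> V v \<Longrightarrow> sig v (scale c x) = mact E (sig v x) (sc c (v, []))"
proof -
  assume v: "v \<in> Q0" and x: "x \<in> V v"
  define F where "F = {b. coord v x b \<noteq> 0}"
  have fF: "finite F" using fin_coord F_def by simp
  have FV: "F \<subseteq> V v" using coord_V v F_def by auto
  have s: "{b. coord v (scale c x) b \<noteq> 0} \<subseteq> F" using coord_scale[OF v x] F_def by auto
  have "sig v (scale c x) = finprod EM (\<lambda>b. T v (coord v (scale c x) b) b) F"
    by (rule sig_super[OF v fF s FV])
  also have "\<dots> = finprod EM (\<lambda>b. mact E (T v (coord v x b) b) (sc c (v, []))) F"
    using coord_scale[OF v x] T_act[OF v] FV T_in[OF v] by (intro fp_cong) (auto intro!: Eax(7) e_PC[OF v])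
  also have "\<dots> = mact E (sig v x) (sc c (v, []))"
    unfolding sig_def F_def[symmetric] using fF FV T_in[OF v] e_PC[OF v] by (intro fp_act[symmetric]) auto
  finally show ?thesis .
qed

lemma sig_e: "v \<in> Q0 \<Longrightarrow> x \<in> V v \<Longrightarrow> sig v x = mact E (sig v x) (sc 1 (v, []))"
  using sig_scale[of v x 1] by simp

end


declare split_paired_All[simp del] split_paired_Ex[simp del]

context extn begin

lemma E4: "A \<in> mcarrier E \<Longrightarrow> B \<in> mcarrier E \<Longrightarrow> C \<in> mcarrier E \<Longrightarrow> D \<in> mcarrier E \<Longrightarrow>
  madd E (madd E A B) (madd E C D) = madd E (madd E A C) (madd E B D)"
  using Eax(3) Elcomm Eax(2) by metis

abbreviation dA :: "'a \<Rightarrow> 'v \<times> 'a list \<Rightarrow> 'k" where "dA a \<equiv> sc 1 (s a, [a])"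

lemma dA_PC: "a \<in> Q1 \<Longrightarrow> dA a \<in> PC" using sc_PC arrow_path by blast

definition z :: "'a \<Rightarrow> 'x \<Rightarrow> 'e" where
  "z a x = madd E (mact E (sig (s a) x) (dA a)) (einv (sig (t a) (X a x)))"

lemma z_in: "a \<in> Q1 \<Longrightarrow> x \<in> V (s a) \<Longrightarrow> z a x \<in> mcarrier E"
  unfolding z_def using sig_in sQ0 tQ0 Eax(7) dA_PC einv_closed Eax(2) by metis

lemma dv_arrow: "a \<in> Q1 \<Longrightarrow> mact GM (dv (s a) x) (dA a) = dv (t a) (X a x)"
  by (auto simp: G_act_sc dv_def fun_eq_iff path_tgt_def eval_path_def)

lemma z_ker: "a \<in> Q1 \<Longrightarrow> x \<in> V (s a) \<Longrightarrow> p (z a x) = (\<lambda>v. 0)"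
proof -
  assume a: "a \<in> Q1" and x: "x \<in> V (s a)"
  have Xx: "X a x \<in> V (t a)" using X_in[OF a x] .
  have s1: "sig (s a) x \<in> mcarrier E" and s2: "sig (t a) (X a x) \<in> mcarrier E" using sig_in sQ0[OF a] tQ0[OF a] by auto
  have "p (z a x) = (\<lambda>v. p (mact E (sig (s a) x) (dA a)) v + p (einv (sig (t a) (X a x))) v)"
    unfolding z_def using p_add Eax(7)[OF s1 dA_PC[OF a]] einv_closed[OF s2] by blast
  also have "\<dots> = (\<lambda>v. dv (t a) (X a x) v + - dv (t a) (X a x) v)"
    using p_act[OF s1 dA_PC[OF a]] sig_p[OF sQ0[OF a] x] p_inv[OF s2] sig_p[OF tQ0[OF a] Xx] dv_arrow[OF a] by simp
  finally show ?thesis by simp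
qed

lemma sc_e_right: "path_alg_mult t (sc c q) (sc d (path_tgt t q, [])) = sc (c * d) q"
  by (simp add: mult_sc_sc)

lemma z_e: "a \<in> Q1 \<Longrightarrow> x \<in> V (s a) \<Longrightarrow> mact E (z a x) (sc 1 (t a, [])) = z a x"
proof -
  assume a: "a \<in> Q1" and x: "x \<in> V (s a)"
  have Xx: "X a x \<in> V (t a)" using X_in[OF a x] .
  have s1: "sig (s a) x \<in> mcarrier E" and s2: "sig (t a) (X a x) \<in> mcarrier E" using sig_in sQ0[OF a] tQ0[OF a] by auto
  have m: "path_alg_mult t (dA a) (sc 1 (t a, [])) = dA a"
    using sc_e_right[of 1 "(s a, [a])" 1] by (simp add: path_tgt_def)
  have "mact E (z a x) (sc 1 (t a, [])) = madd E (mact E (mact E (sig (s a) x) (dA a)) (sc 1 (t a, []))) (mact E (einv (sig (t a) (X a x))) (sc 1 (t a, [])))"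
    unfolding z_def using Eax(8) Eax(7)[OF s1 dA_PC[OF a]] einv_closed[OF s2] e_PC[OF tQ0[OF a]] by blast
  also have "\<dots> = z a x"
    unfolding z_def using Eax(10)[OF s1 dA_PC[OF a] e_PC[OF tQ0[OF a]]] m einv_act[OF s2 e_PC[OF tQ0[OF a]]]
      sig_e[OF tQ0[OF a] Xx] by simp
  finally show ?thesis .
qed

lemma z_add: "a \<in> Q1 \<Longrightarrow> x \<in> V (s a) \<Longrightarrow> y \<in> V (s a) \<Longrightarrow> z a (x + y) = madd E (z a x) (z a y)"
proof -
  assume a: "a \<in> Q1" and x: "x \<in> V (s a)" and y: "y \<in> V (s a)"
  have Xx: "X a x \<in> V (t a)" "X a y \<in> V (t a)" using X_in[OF a] x y by auto
  note sa = sQ0[OF a] and ta = tQ0[OF a]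
  have c: "sig (s a) x \<in> mcarrier E" "sig (s a) y \<in> mcarrier E" "sig (t a) (X a x) \<in> mcarrier E" "sig (t a) (X a y) \<in> mcarrier E"
    using sig_in sa ta by auto
  have "z a (x + y) = madd E (mact E (madd E (sig (s a) x) (sig (s a) y)) (dA a)) (einv (madd E (sig (t a) (X a x)) (sig (t a) (X a y))))"
    unfolding z_def using sig_add[OF sa x y] X_add[OF a x y] sig_add[OF ta Xx] by simp
  also have "\<dots> = madd E (madd E (mact E (sig (s a) x) (dA a)) (mact E (sig (s a) y) (dA a))) (madd E (einv (sig (t a) (X a x))) (einv (sig (t a) (X a y))))"
    using Eax(8)[OF c(1,2) dA_PC[OF a]] einv_add[OF c(3,4)] by simp
  also have "\<dots> = madd E (z a x) (z a y)"
    unfolding z_def using E4 Eax(7) c dA_PC[OF a] einv_closed by metis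
  finally show ?thesis .
qed

lemma z_scale: "a \<in> Q1 \<Longrightarrow> x \<in> V (s a) \<Longrightarrow> z a (scale c x) = mact E (z a x) (sc c (t a, []))"
proof -
  assume a: "a \<in> Q1" and x: "x \<in> V (s a)"
  have Xx: "X a x \<in> V (t a)" using X_in[OF a x] .
  note sa = sQ0[OF a] and ta = tQ0[OF a]
  have c: "sig (s a) x \<in> mcarrier E" "sig (t a) (X a x) \<in> mcarrier E" using sig_in sa ta by auto
  have m1: "path_alg_mult t (sc c (s a, [])) (dA a) = sc c (s a, [a])" by (simp add: mult_sc_sc)
  have m2: "path_alg_mult t (dA a) (sc c (t a, [])) = sc c (s a, [a])" by (simp add: mult_sc_sc path_tgt_def)
  have "mact E (sig (s a) (scale c x)) (dA a) = mact E (mact E (sig (s a) x) (dA a)) (sc c (t a, []))"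
    unfolding sig_scale[OF sa x] using Eax(10)[OF c(1) e_PC[OF sa] dA_PC[OF a]] Eax(10)[OF c(1) dA_PC[OF a] e_PC[OF ta]] m1 m2 by simp
  moreover have "einv (sig (t a) (X a (scale c x))) = mact E (einv (sig (t a) (X a x))) (sc c (t a, []))"
    unfolding X_scale[OF a x] sig_scale[OF ta Xx] using einv_act[OF c(2) e_PC[OF ta]] by simp
  ultimately show ?thesis unfolding z_def
    using Eax(8)[OF Eax(7)[OF c(1) dA_PC[OF a]] einv_closed[OF c(2)] e_PC[OF ta]] by simp
qed

definition gg :: "'a \<Rightarrow> 'x \<Rightarrow> 'v \<times> 'a list \<Rightarrow> 'k" where "gg a x = j (z a x)"

lemma gg_PC: "a \<in> Q1 \<Longrightarrow> x \<in> V (s a) \<Longrightarrow> gg a x \<in> PC"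
  unfolding gg_def using j_PC z_in z_ker by blast

lemma gg_i: "a \<in> Q1 \<Longrightarrow> x \<in> V (s a) \<Longrightarrow> i (gg a x) = z a x"
  unfolding gg_def using i_j z_in z_ker by blast

lemma gg_e: "a \<in> Q1 \<Longrightarrow> x \<in> V (s a) \<Longrightarrow> gg a x = path_alg_mult t (gg a x) (sc c (t a, [])) \<Longrightarrow> True" by simp

lemma gg_scale0: "a \<in> Q1 \<Longrightarrow> x \<in> V (s a) \<Longrightarrow> gg a (scale c x) = (\<lambda>q. if path_tgt t q = t a then gg a x q * c else 0)"
proof -
  assume a: "a \<in> Q1" and x: "x \<in> V (s a)"
  have "gg a (scale c x) = j (mact E (z a x) (sc c (t a, [])))" unfolding gg_def z_scale[OF a x] ..
  also have "\<dots> = path_alg_mult t (gg a x) (sc c (t a, []))"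
    unfolding gg_def using j_act[OF z_in[OF a x] z_ker[OF a x] e_PC[OF tQ0[OF a]]] .
  also have "\<dots> = (\<lambda>q. if path_tgt t q = t a then gg a x q * c else 0)"
    using mult_e[OF PC_fin[OF gg_PC[OF a x]]] .
  finally show ?thesis .
qed

lemma gg_tgt: "a \<in> Q1 \<Longrightarrow> x \<in> V (s a) \<Longrightarrow> gg a x q \<noteq> 0 \<Longrightarrow> path_tgt t q = t a"
  using gg_scale0[of a x 1] by (metis vs.scale_one)

lemma gg_scale: "a \<in> Q1 \<Longrightarrow> x \<in> V (s a) \<Longrightarrow> gg a (scale c x) = (\<lambda>q. c * gg a x q)"
  using gg_scale0 gg_tgt by (fastforce simp: fun_eq_iff mult.commute)

lemma gg_add: "a \<in> Q1 \<Longrightarrow> x \<in> V (s a) \<Longrightarrow> y \<in> V (s a) \<Longrightarrow> gg a (x + y) = (\<lambda>q. gg a x q + gg a y q)"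
  unfolding gg_def z_add using j_add z_in z_ker by blast

lemma gg_coc: "cocdata Q0 Q1 s t scale V gg"
  unfolding cocdata_def using gg_PC gg_tgt gg_add gg_scale by blast

end


declare split_paired_All[simp del] split_paired_Ex[simp del]

context extn begin

definition ff :: "'v \<Rightarrow> 'x \<Rightarrow> 'v \<times> 'a list \<Rightarrow> 'k" where
  "ff = (SOME f. cobound Q0 Q1 s t scale V X gg f)"

lemma ff: "cobound Q0 Q1 s t scale V X gg ff"
  unfolding ff_def using solv gg_coc by (metis someI)

lemma ff_PC: "v \<in> Q0 \<Longrightarrow> x \<in> V v \<Longrightarrow> ff v x \<in> PC"
  and ff_tgt: "v \<in> Q0 \<Longrightarrow> x \<in> V v \<Longrightarrow> ff v x q \<noteq> 0 \<Longrightarrow> path_tgt t q = v"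
  and ff_add: "v \<in> Q0 \<Longrightarrow> x \<in> V v \<Longrightarrow> y \<in> V v \<Longrightarrow> ff v (x + y) = (\<lambda>q. ff v x q + ff v y q)"
  and ff_scale: "v \<in> Q0 \<Longrightarrow> x \<in> V v \<Longrightarrow> ff v (scale c x) = (\<lambda>q. c * ff v x q)"
  and ff_coc: "a \<in> Q1 \<Longrightarrow> x \<in> V (s a) \<Longrightarrow> gg a x = (\<lambda>q. path_alg_mult t (ff (s a) x) (dA a) q - ff (t a) (X a x) q)"
  using ff unfolding cobound_def by blast+

definition sp :: "'v \<Rightarrow> 'x \<Rightarrow> 'e" where "sp v x = madd E (sig v x) (i (\<lambda>q. - ff v x q))"

lemma sp_in: "v \<in> Q0 \<Longrightarrow> x \<in> V v \<Longrightarrow> sp v x \<in> mcarrier E"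
  unfolding sp_def using sig_in i_in neg_PC ff_PC Eax(2) by metis

lemma sp_p: "v \<in> Q0 \<Longrightarrow> x \<in> V v \<Longrightarrow> p (sp v x) = dv v x"
  unfolding sp_def using p_add[OF sig_in i_in[OF neg_PC[OF ff_PC]]] sig_p p_i[OF neg_PC[OF ff_PC]] by simp

lemma sp_add: "v \<in> Q0 \<Longrightarrow> x \<in> V v \<Longrightarrow> y \<in> V v \<Longrightarrow> sp v (x + y) = madd E (sp v x) (sp v y)"
proof -
  assume v: "v \<in> Q0" and x: "x \<in> V v" and y: "y \<in> V v"
  have "i (\<lambda>q. - ff v (x + y) q) = madd E (i (\<lambda>q. - ff v x q)) (i (\<lambda>q. - ff v y q))"
    using i_add[OF neg_PC[OF ff_PC[OF v x]] neg_PC[OF ff_PC[OF v y]]] ff_add[OF v x y] by (simp add: algebra_simps)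
  then show ?thesis unfolding sp_def sig_add[OF v x y]
    using E4 sig_in[OF v] i_in neg_PC ff_PC v x y by metis
qed

lemma neg_e: "v \<in> Q0 \<Longrightarrow> x \<in> V v \<Longrightarrow> path_alg_mult t (\<lambda>q. - ff v x q) (sc c (v, [])) = (\<lambda>q. - ff v (scale c x) q)"
proof -
  assume v: "v \<in> Q0" and x: "x \<in> V v"
  show ?thesis unfolding mult_e[OF PC_fin[OF neg_PC[OF ff_PC[OF v x]]]] ff_scale[OF v x]
    using ff_tgt[OF v x] by (fastforce simp: fun_eq_iff)
qed

lemma sp_scale: "v \<in> Q0 \<Longrightarrow> x \<in> V v \<Longrightarrow> sp v (scale c x) = mact E (sp v x) (sc c (v, []))"
proof -
  assume v: "v \<in> Q0" and x: "x \<in> V v"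
  show ?thesis unfolding sp_def
    using Eax(8)[OF sig_in[OF v] i_in[OF neg_PC[OF ff_PC[OF v x]]] e_PC[OF v]] sig_scale[OF v x]
      i_act[OF neg_PC[OF ff_PC[OF v x]] e_PC[OF v]] neg_e[OF v x] by simp
qed

lemma sp_e: "v \<in> Q0 \<Longrightarrow> x \<in> V v \<Longrightarrow> mact E (sp v x) (sc 1 (v, [])) = sp v x"
  using sp_scale[of v x 1] by simp

lemma sp_zero: "v \<in> Q0 \<Longrightarrow> sp v 0 = mzero E"
  using sp_scale[OF _ V0, of v 0] sp_in[OF _ V0, of v] Eact_zero by (simp add: sc0)

lemma sp_arrow: "a \<in> Q1 \<Longrightarrow> x \<in> V (s a) \<Longrightarrow> mact E (sp (s a) x) (dA a) = sp (t a) (X a x)"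
proof -
  assume a: "a \<in> Q1" and x: "x \<in> V (s a)"
  note sa = sQ0[OF a] and ta = tQ0[OF a]
  have Xx: "X a x \<in> V (t a)" using X_in[OF a x] .
  define S1 where "S1 = sig (s a) x"
  define S2 where "S2 = sig (t a) (X a x)"
  define F1 where "F1 = ff (s a) x"
  define F2 where "F2 = ff (t a) (X a x)"
  have c: "S1 \<in> mcarrier E" "S2 \<in> mcarrier E" "F1 \<in> PC" "F2 \<in> PC"
    using sig_in[OF sa] sig_in[OF ta] ff_PC[OF sa x] ff_PC[OF ta Xx] S1_def S2_def F1_def F2_def by auto
  have F1A: "path_alg_mult t F1 (dA a) \<in> PC" using mult_PC[OF c(3) dA_PC[OF a]] .
  have negm: "path_alg_mult t (\<lambda>q. - F1 q) (dA a) = (\<lambda>q. - path_alg_mult t F1 (dA a) q)"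
    using mult_scaleL[of F1 "dA a" t "-1"] PC_fin[OF c(3)] PC_fin[OF dA_PC[OF a]] by simp
  have zz: "madd E (mact E S1 (dA a)) (einv S2) = i (gg a x)"
    using gg_i[OF a x] unfolding z_def S1_def S2_def by simp
  have S1A: "mact E S1 (dA a) = madd E (i (gg a x)) S2"
  proof -
    have "madd E (i (gg a x)) S2 = madd E (madd E (mact E S1 (dA a)) (einv S2)) S2" using zz by simp
    also have "\<dots> = mact E S1 (dA a)"
      using Eax(3)[OF Eax(7)[OF c(1) dA_PC[OF a]] einv_closed[OF c(2)] c(2)] einv_l[OF c(2)] Ezero_r Eax(7)[OF c(1) dA_PC[OF a]] by simp
    finally show ?thesis by simp
  qed
  have gcoc: "(\<lambda>q. gg a x q + - path_alg_mult t F1 (dA a) q) = (\<lambda>q. - F2 q)"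
    using ff_coc[OF a x] unfolding F1_def F2_def by (simp add: fun_eq_iff)
  have "mact E (sp (s a) x) (dA a) = madd E (mact E S1 (dA a)) (i (path_alg_mult t (\<lambda>q. - F1 q) (dA a)))"
    unfolding sp_def S1_def[symmetric] F1_def[symmetric]
    using Eax(8)[OF c(1) i_in[OF neg_PC[OF c(3)]] dA_PC[OF a]] i_act[OF neg_PC[OF c(3)] dA_PC[OF a]] by simp
  also have "\<dots> = madd E (madd E (i (gg a x)) S2) (i (\<lambda>q. - path_alg_mult t F1 (dA a) q))"
    unfolding S1A negm ..
  also have "\<dots> = madd E S2 (madd E (i (gg a x)) (i (\<lambda>q. - path_alg_mult t F1 (dA a) q)))"
    using Eax(3) Eax(4) Elcomm i_in gg_PC[OF a x] c(2) neg_PC[OF F1A] by metis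
  also have "\<dots> = madd E S2 (i (\<lambda>q. - F2 q))"
    using i_add[OF gg_PC[OF a x] neg_PC[OF F1A]] gcoc by simp
  also have "\<dots> = sp (t a) (X a x)" unfolding sp_def S2_def F2_def ..
  finally show ?thesis .
qed

lemma sp_path: "is_path Q0 Q1 s t (v, as) \<Longrightarrow> x \<in> V v \<Longrightarrow>
  mact E (sp v x) (sc 1 (v, as)) = sp (path_tgt t (v, as)) (eval_path X (v, as) x)"
proof (induction as arbitrary: v x)
  case Nil then show ?case using sp_e by (simp add: is_path_Nil)
next
  case (Cons a as)
  from Cons.prems(1) have a: "a \<in> Q1" "s a = v" "is_path Q0 Q1 s t (t a, as)" by (auto simp: is_path_Cons[OF quiv])
  have x': "x \<in> V (s a)" using Cons.prems(2) a(2) by simp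
  have Xx: "X a x \<in> V (t a)" using X_in[OF a(1) x'] .
  have m: "path_alg_mult t (dA a) (sc 1 (t a, as)) = sc 1 (v, a # as)" using a(2) by (simp add: mult_sc_sc path_tgt_def)
  have rest: "sc 1 (t a, as) \<in> PC" using sc_PC[OF a(3)] .
  have "mact E (sp v x) (sc 1 (v, a # as)) = mact E (mact E (sp (s a) x) (dA a)) (sc 1 (t a, as))"
    using Eax(10)[OF sp_in[OF sQ0[OF a(1)] x'] dA_PC[OF a(1)] rest] m a(2) by simp
  also have "\<dots> = mact E (sp (t a) (X a x)) (sc 1 (t a, as))" using sp_arrow[OF a(1) x'] by simp
  also have "\<dots> = sp (path_tgt t (t a, as)) (eval_path X (t a, as) (X a x))" using Cons.IH[OF a(3) Xx] .
  finally show ?case by (simp add: tgt_Cons eval_Cons[where w="t a"])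
qed

lemma sp_sc: "is_path Q0 Q1 s t r \<Longrightarrow> v \<in> Q0 \<Longrightarrow> x \<in> V v \<Longrightarrow>
  mact E (sp v x) (sc c r) = (if fst r = v then sp (path_tgt t r) (scale c (eval_path X r x)) else mzero E)"
proof (cases "fst r = v")
  case True
  assume r: "is_path Q0 Q1 s t r" and v: "v \<in> Q0" and x: "x \<in> V v"
  have m: "path_alg_mult t (sc 1 r) (sc c (path_tgt t r, [])) = sc c r" using sc_e_right[of 1 r c] by simp
  have tq: "path_tgt t r \<in> Q0" using is_path_tgt'[OF quiv r] .
  have ev: "eval_path X r x \<in> V (path_tgt t r)" using eval_in[OF r] x True by simp
  have "mact E (sp v x) (sc c r) = mact E (mact E (sp v x) (sc 1 r)) (sc c (path_tgt t r, []))"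
    using Eax(10)[OF sp_in[OF v x] sc_PC[OF r] e_PC[OF tq]] m by simp
  also have "mact E (sp v x) (sc 1 r) = sp (path_tgt t r) (eval_path X r x)"
  proof -
    have rr: "(v, snd r) = r" using True by (metis prod.collapse)
    show ?thesis using sp_path[of v "snd r" x] r x unfolding rr by simp
  qed
  finally show ?thesis using sp_scale[OF tq ev] True by simp
next
  case False
  assume r: "is_path Q0 Q1 s t r" and v: "v \<in> Q0" and x: "x \<in> V v"
  have m: "path_alg_mult t (sc 1 (v, [])) (sc c r) = (\<lambda>_. 0)" using False by (simp add: mult_sc_sc)
  have "mact E (sp v x) (sc c r) = mact E (mact E (sp v x) (sc 1 (v, []))) (sc c r)" using sp_e[OF v x] by simp
  also have "\<dots> = mzero E" using Eax(10)[OF sp_in[OF v x] e_PC[OF v] sc_PC[OF r]] m Eact_zero sp_in[OF v x] by simp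
  finally show ?thesis using False by simp
qed

end


declare split_paired_All[simp del] split_paired_Ex[simp del]

context extn begin

definition h :: "('v \<Rightarrow> 'x) \<Rightarrow> 'e" where "h m = finprod EM (\<lambda>v. sp v (m v)) {v. m v \<noteq> 0}"

lemma GM_fin: "m \<in> mcarrier GM \<Longrightarrow> finite {v. m v \<noteq> 0}" by (simp add: GM_carrier)
lemma GM_Q0: "m \<in> mcarrier GM \<Longrightarrow> m v \<noteq> 0 \<Longrightarrow> v \<in> Q0" by (auto simp: GM_carrier)
lemma GM_V: "m \<in> mcarrier GM \<Longrightarrow> v \<in> Q0 \<Longrightarrow> m v \<in> V v" by (simp add: GM_carrier)

lemma h_super: "m \<in> mcarrier GM \<Longrightarrow> finite F \<Longrightarrow> {v. m v \<noteq> 0} \<subseteq> F \<Longrightarrow> F \<subseteq> Q0 \<Longrightarrow>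
  h m = finprod EM (\<lambda>v. sp v (m v)) F"
  unfolding h_def by (rule fp_mono) (auto simp: sp_zero intro: sp_in GM_V)

lemma h_in: "m \<in> mcarrier GM \<Longrightarrow> h m \<in> mcarrier E"
  unfolding h_def using sp_in GM_V GM_Q0 by (intro fp_closed) auto

lemma h_p: "m \<in> mcarrier GM \<Longrightarrow> p (h m) = m"
proof -
  assume m: "m \<in> mcarrier GM"
  have "p (h m) = (\<Sum>v\<in>{v. m v \<noteq> 0}. p (sp v (m v)))"
    unfolding h_def using GM_fin[OF m] sp_in GM_V[OF m] GM_Q0[OF m] by (intro fp_p) auto
  also have "\<dots> = (\<Sum>v\<in>{v. m v \<noteq> 0}. dv v (m v))"
    using sp_p GM_V[OF m] GM_Q0[OF m] by (intro sum.cong) auto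
  also have "\<dots> = m"
  proof (rule ext)
    fix w
    have "(\<Sum>v\<in>{v. m v \<noteq> 0}. dv v (m v)) w = (\<Sum>v\<in>{v. m v \<noteq> 0}. if v = w then m v else 0)"
      unfolding sum_fun_apply dv_def by (rule sum.cong) auto
    also have "\<dots> = m w" using GM_fin[OF m] by (simp add: sum.delta')
    finally show "(\<Sum>v\<in>{v. m v \<noteq> 0}. dv v (m v)) w = m w" .
  qed
  finally show ?thesis .
qed

lemma h_add: "m \<in> mcarrier GM \<Longrightarrow> m' \<in> mcarrier GM \<Longrightarrow> h (\<lambda>v. m v + m' v) = madd E (h m) (h m')"
proof -
  assume m: "m \<in> mcarrier GM" and m': "m' \<in> mcarrier GM"
  define F where "F = {v. m v \<noteq> 0} \<union> {v. m' v \<noteq> 0}"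
  have fF: "finite F" using GM_fin m m' F_def by simp
  have FQ: "F \<subseteq> Q0" using GM_Q0 m m' F_def by auto
  have mm: "(\<lambda>v. m v + m' v) \<in> mcarrier GM" using GM_rmodule m m' unfolding rmodule_def GM_simps by blast
  have "h (\<lambda>v. m v + m' v) = finprod EM (\<lambda>v. sp v (m v + m' v)) F"
    by (rule h_super[OF mm fF _ FQ]) (auto simp: F_def)
  also have "\<dots> = finprod EM (\<lambda>v. madd E (sp v (m v)) (sp v (m' v))) F"
    using sp_add GM_V m m' FQ sp_in by (intro fp_cong) (auto intro!: Eax(2))
  also have "\<dots> = madd E (finprod EM (\<lambda>v. sp v (m v)) F) (finprod EM (\<lambda>v. sp v (m' v)) F)"
    using sp_in GM_V m m' FQ by (intro fp_mult) auto
  also have "\<dots> = madd E (h m) (h m')"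
    using h_super[OF m fF _ FQ] h_super[OF m' fF _ FQ] F_def by auto
  finally show ?thesis .
qed

lemma h_zero: "h (\<lambda>v. 0) = mzero E"
  unfolding h_def by simp

lemma fp_delta: "finite F \<Longrightarrow> a \<in> F \<Longrightarrow> y \<in> mcarrier E \<Longrightarrow> finprod EM (\<lambda>v. if v = a then y else mzero E) F = y"
proof -
  assume F: "finite F" "a \<in> F" and y: "y \<in> mcarrier E"
  have "finprod EM (\<lambda>v. if v = a then y else mzero E) {a} = finprod EM (\<lambda>v. if v = a then y else mzero E) F"
    by (rule fp_mono) (use F y Eax(1) in auto)
  moreover have "finprod EM (\<lambda>v. if v = a then y else mzero E) {a} = y" using fp_single[of "\<lambda>v. if v = a then y else mzero E" a] y by simp
  ultimately show ?thesis by simp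
qed

lemma h_dv: "w \<in> Q0 \<Longrightarrow> y \<in> V w \<Longrightarrow> h (dv w y) = sp w y"
proof -
  assume w: "w \<in> Q0" and y: "y \<in> V w"
  have "h (dv w y) = finprod EM (\<lambda>v. sp v (dv w y v)) {w}"
    by (rule h_super[OF dv_in[OF w y]]) (auto simp: dv_def w)
  also have "\<dots> = sp w y" using fp_single[of "\<lambda>v. sp v (dv w y v)" w] sp_in[OF w y] by (simp add: dv_def)
  finally show ?thesis .
qed

lemma h_sc: "m \<in> mcarrier GM \<Longrightarrow> is_path Q0 Q1 s t r \<Longrightarrow> h (mact GM m (sc c r)) = mact E (h m) (sc c r)"
proof -
  assume m: "m \<in> mcarrier GM" and r: "is_path Q0 Q1 s t r"
  have fr: "fst r \<in> Q0" using is_path_fst[OF r] .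
  have tq: "path_tgt t r \<in> Q0" using is_path_tgt'[OF quiv r] .
  define Y where "Y = scale c (eval_path X r (m (fst r)))"
  have Y: "Y \<in> V (path_tgt t r)"
    unfolding Y_def using vs.subspace_scale[OF subsp[OF tq] eval_in[OF r GM_V[OF m fr]]] .
  have "mact GM m (sc c r) = dv (path_tgt t r) Y" by (auto simp: G_act_sc dv_def Y_def fun_eq_iff)
  then have L: "h (mact GM m (sc c r)) = sp (path_tgt t r) Y" using h_dv[OF tq Y] by simp
  define F where "F = insert (fst r) {v. m v \<noteq> 0}"
  have fF: "finite F" using GM_fin[OF m] F_def by simp
  have FQ: "F \<subseteq> Q0" using GM_Q0[OF m] fr F_def by auto
  have "h m = finprod EM (\<lambda>v. sp v (m v)) F"
    by (rule h_super[OF m fF _ FQ]) (auto simp: F_def)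
  then have "mact E (h m) (sc c r) = mact E (finprod EM (\<lambda>v. sp v (m v)) F) (sc c r)"
    by simp
  also have "\<dots> = finprod EM (\<lambda>v. mact E (sp v (m v)) (sc c r)) F"
    using fF sp_in GM_V[OF m] FQ sc_PC[OF r] by (intro fp_act) auto
  also have "\<dots> = finprod EM (\<lambda>v. if v = fst r then sp (path_tgt t r) Y else mzero E) F"
    using sp_sc[OF r] GM_V[OF m] FQ sp_in[OF tq Y] Eax(1) by (intro fp_cong) (auto simp: Y_def)
  also have "\<dots> = sp (path_tgt t r) Y" using fp_delta[OF fF _ sp_in[OF tq Y]] F_def by simp
  finally show ?thesis using L by simp
qed

lemma G_act_empty: "mact GM m (\<lambda>_. 0) = (\<lambda>w. 0)"
  by (rule ext) (simp add: G_act_def')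

lemma h_act_ind: "finite A \<Longrightarrow> m \<in> mcarrier GM \<Longrightarrow> r \<in> PC \<Longrightarrow> {q. r q \<noteq> 0} \<subseteq> A \<Longrightarrow>
  h (mact GM m r) = mact E (h m) r"
proof (induction A arbitrary: r rule: finite_induct)
  case empty
  then have "r = (\<lambda>_. 0)" by auto
  then show ?case using G_act_empty h_zero Eact_zero h_in[OF empty.prems(1)] by simp
next
  case (insert a A)
  define r0 where "r0 = r(a := 0)"
  have sub: "{q. r0 q \<noteq> 0} \<subseteq> {q. r q \<noteq> 0}" unfolding r0_def by auto
  have r0PC: "r0 \<in> PC" unfolding PC_iff
  proof (intro conjI allI impI)
    show "finite {q. r0 q \<noteq> 0}" using finite_subset[OF sub PC_fin[OF insert.prems(2)]] .
    fix q assume "r0 q \<noteq> 0"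
    then have "r q \<noteq> 0" using sub by blast
    then show "is_path Q0 Q1 s t q" using PC_path[OF insert.prems(2)] by blast
  qed
  have r0A: "{q. r0 q \<noteq> 0} \<subseteq> A" using insert.prems(3) r0_def by auto
  show ?case
  proof (cases "r a = 0")
    case True
    then have "r = r0" unfolding r0_def by auto
    then show ?thesis using insert.IH[OF insert.prems(1) r0PC r0A] by simp
  next
    case False
    have ap: "is_path Q0 Q1 s t a" using PC_path[OF insert.prems(2) False] .
    have rr: "r = (\<lambda>q. r0 q + sc (r a) a q)" unfolding r0_def sc_def by auto
    have scPC: "sc (r a) a \<in> PC" using sc_PC[OF ap] .
    have "mact GM m r = (\<lambda>v. mact GM m r0 v + mact GM m (sc (r a) a) v)"
      using G_act_addr[OF r0PC scPC] rr by simp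
    then have "h (mact GM m r) = madd E (h (mact GM m r0)) (h (mact GM m (sc (r a) a)))"
      using h_add G_act_in[OF insert.prems(1) r0PC] G_act_in[OF insert.prems(1) scPC] by simp
    also have "\<dots> = madd E (mact E (h m) r0) (mact E (h m) (sc (r a) a))"
      using insert.IH[OF insert.prems(1) r0PC r0A] h_sc[OF insert.prems(1) ap] by simp
    also have "\<dots> = mact E (h m) r"
      using Eax(9)[OF h_in[OF insert.prems(1)] r0PC scPC] rr by simp
    finally show ?thesis .
  qed
qed

lemma h_act: "m \<in> mcarrier GM \<Longrightarrow> r \<in> PC \<Longrightarrow> h (mact GM m r) = mact E (h m) r"
  using h_act_ind[OF PC_fin] by blast

definition DD :: "'e \<Rightarrow> 'e" where "DD x = madd E x (einv (h (p x)))"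

lemma DD_in: "x \<in> mcarrier E \<Longrightarrow> DD x \<in> mcarrier E"
  unfolding DD_def using Eax(2) einv_closed h_in p_in by blast

lemma DD_ker: "x \<in> mcarrier E \<Longrightarrow> p (DD x) = (\<lambda>v. 0)"
  unfolding DD_def using p_add[OF _ einv_closed[OF h_in[OF p_in]]] p_inv[OF h_in[OF p_in]] h_p[OF p_in] by simp

definition qq :: "'e \<Rightarrow> 'v \<times> 'a list \<Rightarrow> 'k" where "qq x = j (DD x)"

lemma lemmaB: "mod_hom PR E (regular_module Q0 Q1 s t) qq \<and> (\<forall>n\<in>PC. qq (i n) = n)"
proof (intro conjI ballI)
  show "mod_hom PR E (regular_module Q0 Q1 s t) qq"
    unfolding mod_hom_def RM_simps PR_simps
  proof (intro conjI ballI)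
    fix x assume x: "x \<in> mcarrier E"
    show "qq x \<in> PC" unfolding qq_def using j_PC[OF DD_in[OF x] DD_ker[OF x]] .
  next
    fix x y assume x: "x \<in> mcarrier E" and y: "y \<in> mcarrier E"
    have hx: "h (p x) \<in> mcarrier E" and hy: "h (p y) \<in> mcarrier E" using h_in p_in x y by auto
    have "DD (madd E x y) = madd E (madd E x y) (einv (madd E (h (p x)) (h (p y))))"
      unfolding DD_def p_add[OF x y] h_add[OF p_in[OF x] p_in[OF y]] ..
    also have "\<dots> = madd E (DD x) (DD y)"
      unfolding DD_def einv_add[OF hx hy] using E4 x y einv_closed hx hy by metis
    finally show "qq (madd E x y) = (\<lambda>q. qq x q + qq y q)"
      unfolding qq_def using j_add[OF DD_in[OF x] DD_ker[OF x] DD_in[OF y] DD_ker[OF y]] by simp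
  next
    fix x r assume x: "x \<in> mcarrier E" and r: "r \<in> PC"
    have hx: "h (p x) \<in> mcarrier E" using h_in p_in x by auto
    have "DD (mact E x r) = madd E (mact E x r) (einv (mact E (h (p x)) r))"
      unfolding DD_def p_act[OF x r] h_act[OF p_in[OF x] r] ..
    also have "\<dots> = mact E (DD x) r"
      unfolding DD_def using Eax(8)[OF x einv_closed[OF hx] r] einv_act[OF hx r] by simp
    finally show "qq (mact E x r) = path_alg_mult t (qq x) r"
      unfolding qq_def using j_act[OF DD_in[OF x] DD_ker[OF x] r] by simp
  qed
next
  fix n assume n: "n \<in> PC"
  have "DD (i n) = i n" unfolding DD_def p_i[OF n] h_zero einv_zero using Ezero_r[OF i_in[OF n]] by simp
  then show "qq (i n) = n" unfolding qq_def using j_i[OF n] by simp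
qed

end

context qrep begin

lemma lemmaB_global:
  assumes solv: "\<forall>g. cocdata Q0 Q1 s t scale V g \<longrightarrow> (\<exists>f. cobound Q0 Q1 s t scale V X g f)"
  shows "Ext1_vanishes PR GM (regular_module Q0 Q1 s t)"
  unfolding Ext1_vanishes_def
proof (intro allI impI)
  fix E :: "(('v \<times> 'a list \<Rightarrow> 'k) \<times> ('v \<Rightarrow> 'x), 'v \<times> 'a list \<Rightarrow> 'k) rmod" and i p
  assume H: "rmodule PR E \<and> mod_hom PR (regular_module Q0 Q1 s t) E i \<and> mod_hom PR E GM p \<and>
    inj_on i (mcarrier (regular_module Q0 Q1 s t)) \<and> p ` mcarrier E = mcarrier GM \<and>
    {x \<in> mcarrier E. p x = mzero GM} = i ` mcarrier (regular_module Q0 Q1 s t)"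
  interpret X: extn Q0 Q1 s t scale V X E i p
    by unfold_locales (use H solv quiv rep in \<open>simp_all add: RM_simps\<close>)
  show "\<exists>q. mod_hom PR E (regular_module Q0 Q1 s t) q \<and> (\<forall>x\<in>mcarrier (regular_module Q0 Q1 s t). q (i x) = x)"
    using X.lemmaB unfolding RM_simps by blast
qed

end

theorem proposition1p8:
  fixes Q0 :: "'v set" and Q1 :: "'a set" and s t :: "'a \<Rightarrow> 'v"
    and scale :: "'k::field \<Rightarrow> 'x::ab_group_add \<Rightarrow> 'x"
    and V :: "'v \<Rightarrow> 'x set" and X :: "'a \<Rightarrow> 'x \<Rightarrow> 'x"
    and P0 :: "'v set" and P1 :: "'a set"
  assumes "alg_closed_field TYPE('k)"
    and "quiver Q0 Q1 s t"
    and "representation Q0 Q1 s t scale V X"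
    and "Ext1_vanishes (path_ring Q0 Q1 s t) (G_module Q0 Q1 s t scale V X) (regular_module Q0 Q1 s t)"
    and "closed_subquiver Q0 Q1 s t P0 P1"
  shows "Ext1_vanishes (path_ring P0 P1 s t) (G_module P0 P1 s t scale V X) (regular_module P0 P1 s t)"
proof -
  interpret Qr: qrep Q0 Q1 s t scale V X by unfold_locales (use assms in auto)
  interpret Pr: qrep P0 P1 s t scale V X
    by unfold_locales (use closed_quiver[OF assms(2,5)] closed_rep[OF assms(2,5,3)] in auto)
  have solvQ: "\<forall>g. cocdata Q0 Q1 s t scale V g \<longrightarrow> (\<exists>f. cobound Q0 Q1 s t scale V X g f)"
    using Qr.lemmaA'[OF assms(4)] .
  have solvP: "\<forall>g. cocdata P0 P1 s t scale V g \<longrightarrow> (\<exists>f. cobound P0 P1 s t scale V X g f)"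
    using projection[OF assms(2,3,5) solvQ] .
  show ?thesis using Pr.lemmaB_global[OF solvP] .
qed


end
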